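(* Let $\{\mu_t\}_{t\ge0}$ be a weakly continuous $\rhd$-convolution semigroup with $\mu_0=\delta_0$ and associated pair $(\gamma,\tau)$, and assume that the support of each $\mu_t$ is compact. The following are equivalent: (1) there exists $t_0>0$ such that $\mu_{t_0}$ is symmetric; (2) $\mu_t$ is symmetric for all $t>0$; (3) $\gamma=0$ and $\tau$ is symmetric.
   Context: A measure $\mu$ on $\mathbb{R}$ is symmetric if $\mu(B)=\mu(-B)$ for all Borel sets $B$. For a probability measure $\mu$, $G_\mu(z)=\int\frac{1}{z-x}d\mu(x)$ on $\mathbb{C}^+$ and $H_\mu=1/G_\mu$; $\mu\rhd\nu$ is the unique probability measure with $H_{\mu\rhd\nu}=H_\mu\circ H_\nu$. A weakly continuous $\rhd$-convolution semigroup is a weakly continuous family $\{\mu_t\}_{t\ge0}$ of probability measures with $\mu_s\rhd\mu_t=\mu_{s+t}$. For such a semigroup with $\mu_0=\delta_0$ there is a unique pair $(\gamma,\tau)$, $\gamma\in\mathbb{R}$, $\tau$ positive finite, such that with $A(z)=-\gamma+\int\frac{1+xz}{x-z}d\tau(x)$ the maps $H_t:=H_{\mu_t}$ solve $\frac{d}{dt}H_t(z)=A(H_t(z))$, $H_0(z)=z$, on $\mathbb{C}\setminus\mathbb{R}$ (the associated pair). *)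

theory Defs
  imports "HOL-Probability.Probability"
begin

definition cauchy_G :: "real measure \<Rightarrow> complex \<Rightarrow> complex" where
  "cauchy_G M z = (\<integral>x. 1 / (z - complex_of_real x) \<partial>M)"

definition cauchy_H :: "real measure \<Rightarrow> complex \<Rightarrow> complex" where
  "cauchy_H M z = 1 / cauchy_G M z"

definition is_monotone_conv :: "real measure \<Rightarrow> real measure \<Rightarrow> real measure \<Rightarrow> bool" where
  "is_monotone_conv \<mu> \<nu> \<rho> \<longleftrightarrow>
     (\<forall>z. Im z > 0 \<longrightarrow> cauchy_H \<rho> z = cauchy_H \<mu> (cauchy_H \<nu> z))"

definition real_prob_measure :: "real measure \<Rightarrow> bool" where
  "real_prob_measure M \<longleftrightarrow> prob_space M \<and> sets M = sets borel"

definition symmetric_measure :: "real measure \<Rightarrow> bool" where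
  "symmetric_measure M \<longleftrightarrow> (\<forall>B \<in> sets borel. emeasure M B = emeasure M (uminus ` B))"

definition measure_support :: "real measure \<Rightarrow> real set" where
  "measure_support M = {x. \<forall>e>0. emeasure M (ball x e) > 0}"

definition weakly_continuous_family :: "(real \<Rightarrow> real measure) \<Rightarrow> bool" where
  "weakly_continuous_family \<mu> \<longleftrightarrow>
     (\<forall>f :: real \<Rightarrow> real. continuous_on UNIV f \<longrightarrow> bounded (range f) \<longrightarrow>
        continuous_on {0..} (\<lambda>t. \<integral>x. f x \<partial>(\<mu> t)))"

definition monotone_conv_semigroup :: "(real \<Rightarrow> real measure) \<Rightarrow> bool" where
  "monotone_conv_semigroup \<mu> \<longleftrightarrow>
     (\<forall>t\<ge>0. real_prob_measure (\<mu> t)) \<and> weakly_continuous_family \<mu> \<and>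
     (\<forall>s\<ge>0. \<forall>t\<ge>0. is_monotone_conv (\<mu> s) (\<mu> t) (\<mu> (s + t)))"

definition gen_A :: "real \<Rightarrow> real measure \<Rightarrow> complex \<Rightarrow> complex" where
  "gen_A \<gamma> \<tau> z = - complex_of_real \<gamma> +
     (\<integral>x. (1 + complex_of_real x * z) / (complex_of_real x - z) \<partial>\<tau>)"

definition associated_pair :: "(real \<Rightarrow> real measure) \<Rightarrow> real \<Rightarrow> real measure \<Rightarrow> bool" where
  "associated_pair \<mu> \<gamma> \<tau> \<longleftrightarrow>
     finite_measure \<tau> \<and> sets \<tau> = sets borel \<and>
     (\<forall>z. Im z \<noteq> 0 \<longrightarrow>
        cauchy_H (\<mu> 0) z = z \<and>
        (\<forall>t\<ge>0. ((\<lambda>s. cauchy_H (\<mu> s) z) has_vector_derivative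
                   gen_A \<gamma> \<tau> (cauchy_H (\<mu> t) z)) (at t within {0..})))"

end

theory Submission
  imports Defs "HOL-Complex_Analysis.Complex_Analysis"
begin


lemma kernel_norm_le:
  fixes z :: complex and x :: real
  assumes "Im z \<noteq> 0"
  shows "norm (1 / (z - complex_of_real x)) \<le> 1 / \<bar>Im z\<bar>"
proof -
  have "\<bar>Im z\<bar> = \<bar>Im (z - complex_of_real x)\<bar>" by simp
  also have "\<dots> \<le> cmod (z - complex_of_real x)" by (rule abs_Im_le_cmod)
  finally have "\<bar>Im z\<bar> \<le> cmod (z - complex_of_real x)" .
  then show ?thesis using assms
    by (simp add: norm_divide frac_le)
qed

lemma kernel_integrable:
  assumes "finite_measure M" "sets M = sets borel" "Im z \<noteq> 0"
  shows "integrable M (\<lambda>x. 1 / (z - complex_of_real x))"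
proof -
  interpret finite_measure M by fact
  have m: "(\<lambda>x. 1 / (z - complex_of_real x)) \<in> borel_measurable M"
    using measurable_cong_sets[OF assms(2) refl] by (simp add: measurable_cong_sets[OF assms(2) refl])
  show ?thesis
    by (rule integrable_const_bound[where B="1/\<bar>Im z\<bar>"]) (use kernel_norm_le[OF assms(3)] m in auto)
qed

lemma param_integral_deriv:
  fixes p q :: "real \<Rightarrow> real"
  assumes fin: "finite_measure M" and sM: "sets M = sets borel"
    and pm: "p \<in> borel_measurable borel" and qm: "q \<in> borel_measurable borel"
    and qb: "AE x in M. \<bar>q x\<bar> \<le> Q"
    and d: "d > 0" and c: "c > 0"
    and lb: "\<And>u. u \<in> ball u0 d \<Longrightarrow> AE x in M. cmod (complex_of_real (p x) + complex_of_real (q x) * u) \<ge> c"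
  shows "((\<lambda>u. \<integral>x. 1 / (complex_of_real (p x) + complex_of_real (q x) * u) \<partial>M) has_field_derivative
          (\<integral>x. - complex_of_real (q x) / (complex_of_real (p x) + complex_of_real (q x) * u0)^2 \<partial>M)) (at u0)"
proof -
  interpret finite_measure M by fact
  define k where "k u x = 1 / (complex_of_real (p x) + complex_of_real (q x) * u)" for u x
  define k' where "k' x = - complex_of_real (q x) / (complex_of_real (p x) + complex_of_real (q x) * u0)^2" for x
  have pM[measurable]: "p \<in> borel_measurable M" using pm by (subst measurable_cong_sets[OF sM refl]) simp
  have qM[measurable]: "q \<in> borel_measurable M" using qm by (subst measurable_cong_sets[OF sM refl]) simp
  have km: "k u \<in> borel_measurable M" for u
    unfolding k_def by measurable
  have kint: "integrable M (k u)" if "u \<in> ball u0 d" for u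
  proof (rule integrable_const_bound[where B="1/c"])
    show "AE x in M. norm (k u x) \<le> 1 / c"
      using lb[OF that] by eventually_elim (use c in \<open>auto simp: k_def norm_divide divide_simps\<close>)
  qed (rule km)
  have k'm: "k' \<in> borel_measurable M"
    unfolding k'_def by measurable
  have k'int: "integrable M k'"
  proof (rule integrable_const_bound[where B="\<bar>Q\<bar>/c^2"])
    show "AE x in M. norm (k' x) \<le> \<bar>Q\<bar> / c^2"
      using lb[of u0, OF centre_in_ball[THEN iffD2, OF d]] qb
    proof eventually_elim
      case (elim x)
      have "cmod (complex_of_real (p x) + complex_of_real (q x) * u0) ^ 2 \<ge> c^2"
        using elim c by (intro power_mono) auto
      moreover have "cmod (complex_of_real (q x)) \<le> \<bar>Q\<bar>" using elim by auto
      ultimately show ?case using c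
        unfolding k'_def norm_divide norm_minus_cancel norm_power by (intro frac_le) auto
    qed
  qed (rule k'm)
  define C where "C = Q^2 / c^3 * measure M (space M)"
  have bound: "norm ((\<integral>x. k u x \<partial>M) - (\<integral>x. k u0 x \<partial>M) - (u - u0) * (\<integral>x. k' x \<partial>M))
                \<le> C * (norm (u - u0))^2" if u: "u \<in> ball u0 d" for u
  proof -
    have u0: "u0 \<in> ball u0 d" using d by simp
    have "(\<integral>x. k u x \<partial>M) - (\<integral>x. k u0 x \<partial>M) - (u - u0) * (\<integral>x. k' x \<partial>M)
          = (\<integral>x. k u x - k u0 x - (u - u0) * k' x \<partial>M)"
      using kint[OF u] kint[OF u0] k'int by simp
    also have "norm \<dots> \<le> (\<integral>x. norm (k u x - k u0 x - (u - u0) * k' x) \<partial>M)"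
      by (rule integral_norm_bound)
    also have "\<dots> \<le> (\<integral>x. Q^2 / c^3 * (norm (u - u0))^2 \<partial>M)"
    proof (rule integral_mono_AE)
      show "integrable M (\<lambda>x. norm (k u x - k u0 x - (u - u0) * k' x))"
        using kint[OF u] kint[OF u0] k'int by auto
      show "integrable M (\<lambda>x. Q^2 / c^3 * (norm (u - u0))^2)" by simp
      show "AE x in M. norm (k u x - k u0 x - (u - u0) * k' x) \<le> Q^2 / c^3 * (norm (u - u0))^2"
        using lb[OF u] lb[OF u0] qb
      proof eventually_elim
        case (elim x)
        define a where "a = complex_of_real (p x)"
        define b where "b = complex_of_real (q x)"
        have n1: "cmod (a + b * u) \<ge> c" and n0: "cmod (a + b * u0) \<ge> c" using elim by (auto simp: a_def b_def)
        have nz1: "a + b * u \<noteq> 0" and nz0: "a + b * u0 \<noteq> 0" using n1 n0 c by auto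
        define A where "A = a + b * u"
        define B where "B = a + b * u0"
        have AB: "A - B = b * (u - u0)" by (simp add: A_def B_def algebra_simps)
        have "k u x - k u0 x - (u - u0) * k' x = 1 / A - 1 / B + (A - B) / B^2"
          unfolding k_def k'_def a_def[symmetric] b_def[symmetric] A_def[symmetric] B_def[symmetric] AB
          by (simp add: field_simps)
        also have "\<dots> = (A - B)^2 / (A * B^2)"
          using nz1 nz0 unfolding A_def[symmetric] B_def[symmetric]
          by (simp add: field_simps power2_eq_square)
        finally have eq: "k u x - k u0 x - (u - u0) * k' x = b^2 * (u - u0)^2 / ((a + b * u) * (a + b * u0)^2)"
          unfolding AB A_def B_def by (simp add: power_mult_distrib right_diff_distrib[symmetric])
        have "cmod ((a + b * u) * (a + b * u0)^2) \<ge> c * c^2"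
          unfolding norm_mult norm_power using n1 n0 c
          by (intro mult_mono power_mono) auto
        moreover have "cmod (b^2 * (u - u0)^2) \<le> Q^2 * (cmod (u - u0))^2"
          unfolding norm_mult norm_power using elim
          by (intro mult_right_mono power_mono) (auto simp: b_def)
        ultimately have "cmod (b^2 * (u - u0)^2 / ((a + b * u) * (a + b * u0)^2)) \<le> Q^2 * (cmod (u - u0))^2 / (c * c^2)"
          unfolding norm_divide using c by (intro frac_le) auto
        then show ?case unfolding eq by (simp add: power3_eq_cube power2_eq_square field_simps)
      qed
    qed
    also have "\<dots> = C * (norm (u - u0))^2"
      by (simp add: C_def)
    finally show ?thesis .
  qed
  show ?thesis
    unfolding has_field_derivative_iff
  proof -
    have ev: "\<forall>\<^sub>F u in at u0. norm ((\<integral>x. k u x \<partial>M) / (u - u0) - (\<integral>x. k u0 x \<partial>M) / (u - u0) - (\<integral>x. k' x \<partial>M)) \<le> C * norm (u - u0)"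
    proof -
      have "\<forall>\<^sub>F u in at u0. u \<in> ball u0 d \<and> u \<noteq> u0"
        using d by (auto simp: eventually_at dist_commute intro!: exI[of _ d])
      then show ?thesis
      proof eventually_elim
        case (elim u)
        then have nz: "u - u0 \<noteq> 0" by simp
        have "(\<integral>x. k u x \<partial>M) / (u - u0) - (\<integral>x. k u0 x \<partial>M) / (u - u0) - (\<integral>x. k' x \<partial>M)
             = ((\<integral>x. k u x \<partial>M) - (\<integral>x. k u0 x \<partial>M) - (u - u0) * (\<integral>x. k' x \<partial>M)) / (u - u0)"
          using nz by (simp add: diff_divide_distrib)
        then have "norm ((\<integral>x. k u x \<partial>M) / (u - u0) - (\<integral>x. k u0 x \<partial>M) / (u - u0) - (\<integral>x. k' x \<partial>M))
             \<le> C * (norm (u - u0))^2 / norm (u - u0)"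
          using bound[OF conjunct1[OF elim]] nz by (simp add: norm_divide divide_right_mono)
        then show ?case using nz by (simp add: power2_eq_square)
      qed
    qed
    have "((\<lambda>u. C * norm (u - u0)) \<longlongrightarrow> C * norm (u0 - u0)) (at u0)"
      by (intro tendsto_intros)
    then have "((\<lambda>u. C * norm (u - u0)) \<longlongrightarrow> 0) (at u0)" by simp
    from Lim_null_comparison[OF ev this]
    have "((\<lambda>u. (\<integral>x. k u x \<partial>M) / (u - u0) - (\<integral>x. k u0 x \<partial>M) / (u - u0) - (\<integral>x. k' x \<partial>M)) \<longlongrightarrow> 0) (at u0)" .
    then have "((\<lambda>u. (\<integral>x. k u x \<partial>M) / (u - u0) - (\<integral>x. k u0 x \<partial>M) / (u - u0)) \<longlongrightarrow> (\<integral>x. k' x \<partial>M)) (at u0)"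
      by (rule LIM_zero_cancel)
    then show "((\<lambda>y. ((\<integral>x. 1 / (complex_of_real (p x) + complex_of_real (q x) * y) \<partial>M) -
                  (\<integral>x. 1 / (complex_of_real (p x) + complex_of_real (q x) * u0) \<partial>M)) / (y - u0)) \<longlongrightarrow>
            (\<integral>x. - complex_of_real (q x) / (complex_of_real (p x) + complex_of_real (q x) * u0)\<^sup>2 \<partial>M)) (at u0)"
      unfolding k_def k'_def by (simp add: diff_divide_distrib)
  qed
qed


lemma G_holo:
  assumes "finite_measure M" "sets M = sets borel"
  shows "cauchy_G M holomorphic_on {z. Im z > 0}"
proof -
  have "cauchy_G M field_differentiable at u0" if "Im u0 > 0" for u0
  proof -
    have "((\<lambda>u. \<integral>x. 1 / (complex_of_real (- x) + complex_of_real 1 * u) \<partial>M) has_field_derivative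
          (\<integral>x. - complex_of_real 1 / (complex_of_real (- x) + complex_of_real 1 * u0)^2 \<partial>M)) (at u0)"
    proof (rule param_integral_deriv[OF assms, where Q=1 and d="Im u0/2" and c="Im u0/2"])
      fix u assume u: "u \<in> ball u0 (Im u0 / 2)"
      have "\<bar>Im u - Im u0\<bar> \<le> cmod (u - u0)" using abs_Im_le_cmod[of "u - u0"] by simp
      also have "\<dots> < Im u0 / 2" using u by (simp add: dist_norm norm_minus_commute)
      finally have "Im u \<ge> Im u0 / 2" by linarith
      then show "AE x in M. Im u0 / 2 \<le> cmod (complex_of_real (- x) + complex_of_real 1 * u)"
        using abs_Im_le_cmod[of "complex_of_real (- x) + complex_of_real 1 * u" for x]
        by (intro AE_I2) (smt (verit) Im_complex_of_real complex_Im_numeral imaginary_unit.sel(2) mult_cancel_right1 of_real_1 plus_complex.sel(2))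
    qed (use that in auto)
    then show ?thesis unfolding cauchy_G_def field_differentiable_def
      by (auto simp: algebra_simps)
  qed
  then show ?thesis
    by (simp add: holomorphic_on_def field_differentiable_at_within)
qed

lemma Im_kernel: "Im (1 / (z - complex_of_real x)) = - Im z / (cmod (z - complex_of_real x))^2"
  by (simp add: Im_divide cmod_def)

lemma G_Im_neg:
  assumes "finite_measure M" "sets M = sets borel" "emeasure M (space M) \<noteq> 0" "Im z > 0"
  shows "Im (cauchy_G M z) < 0"
proof -
  interpret finite_measure M by fact
  have int: "integrable M (\<lambda>x. 1 / (z - complex_of_real x))"
    using kernel_integrable[OF assms(1,2)] assms(4) by simp
  have "Im (cauchy_G M z) = (\<integral>x. Im (1 / (z - complex_of_real x)) \<partial>M)"
    unfolding cauchy_G_def using int by simp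
  also have "\<dots> = (\<integral>x. - (Im z / (cmod (z - complex_of_real x))^2) \<partial>M)"
    by (simp add: Im_kernel)
  also have "\<dots> = (\<integral>x. Im z / (cmod (z - complex_of_real x))^2 \<partial>M) * (-1)"
    by (simp only: integral_minus)
  finally have "Im (cauchy_G M z) = (\<integral>x. Im z / (cmod (z - complex_of_real x))^2 \<partial>M) * (-1)" .
  moreover have "(\<integral>x. Im z / (cmod (z - complex_of_real x))^2 \<partial>M) > 0"
  proof -
    have i2: "integrable M (\<lambda>x. Im z / (cmod (z - complex_of_real x))^2)"
    proof -
      have "integrable M (\<lambda>x. - Im (1 / (z - complex_of_real x)))" using int by auto
      then show ?thesis by (simp add: Im_kernel)
    qed
    have pos: "Im z / (cmod (z - complex_of_real x))^2 > 0" for x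
    proof -
      have "z - complex_of_real x \<noteq> 0" using assms(4) by (auto simp: complex_eq_iff)
      then show ?thesis using assms(4) by auto
    qed
    have "(\<integral>x. Im z / (cmod (z - complex_of_real x))^2 \<partial>M) \<ge> 0"
      using pos by (intro integral_nonneg_AE) (auto intro: less_imp_le)
    moreover have "(\<integral>x. Im z / (cmod (z - complex_of_real x))^2 \<partial>M) \<noteq> 0"
    proof
      assume "(\<integral>x. Im z / (cmod (z - complex_of_real x))^2 \<partial>M) = 0"
      then have "AE x in M. Im z / (cmod (z - complex_of_real x))^2 = 0"
        using integral_nonneg_eq_0_iff_AE[OF i2] pos by (auto intro: less_imp_le)
      then have "AE x in M. False" using pos by (auto elim: AE_mp simp: less_le)
      then show False using assms(3) using ae_filter_eq_bot_iff[of M] by (simp add: trivial_limit_def)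
    qed
    ultimately show ?thesis by simp
  qed
  ultimately show ?thesis by simp
qed

lemma H_Im_pos:
  assumes "finite_measure M" "sets M = sets borel" "emeasure M (space M) \<noteq> 0" "Im z > 0"
  shows "Im (cauchy_H M z) > 0" "cauchy_G M z \<noteq> 0"
proof -
  have g: "Im (cauchy_G M z) < 0" by (rule G_Im_neg[OF assms])
  then show "cauchy_G M z \<noteq> 0" by auto
  then have "(cmod (cauchy_G M z))^2 > 0" by simp
  then show "Im (cauchy_H M z) > 0"
    unfolding cauchy_H_def using g by (simp add: Im_divide cmod_def divide_neg_pos)
qed

definition refl_meas :: "real measure \<Rightarrow> real measure" where
  "refl_meas M = distr M borel uminus"

lemma refl_sets: "sets (refl_meas M) = sets borel"
  by (simp add: refl_meas_def)

lemma refl_finite: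
  assumes "finite_measure M" "sets M = sets borel" shows "finite_measure (refl_meas M)"
  unfolding refl_meas_def
  using assms by (intro finite_measure.finite_measure_distr) (auto simp: measurable_cong_sets[OF assms(2) refl])

lemma refl_prob:
  assumes "prob_space M" "sets M = sets borel" shows "prob_space (refl_meas M)"
  unfolding refl_meas_def
  using assms by (intro prob_space.prob_space_distr) (auto simp: measurable_cong_sets[OF assms(2) refl])

lemma refl_emeasure:
  assumes "sets M = sets borel" "B \<in> sets borel"
  shows "emeasure (refl_meas M) B = emeasure M (uminus ` B)"
proof -
  have "emeasure (refl_meas M) B = emeasure M (uminus -` B \<inter> space M)"
    unfolding refl_meas_def using assms
    by (subst emeasure_distr) (auto simp: measurable_cong_sets[OF assms(1) refl])
  also have "uminus -` B \<inter> space M = uminus ` B"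
    using sets_eq_imp_space_eq[OF assms(1)] by (auto simp: image_iff) (metis minus_minus)
  finally show ?thesis .
qed

lemma symmetric_iff_refl:
  assumes "sets M = sets borel"
  shows "symmetric_measure M \<longleftrightarrow> refl_meas M = M"
proof
  assume "symmetric_measure M"
  then show "refl_meas M = M"
    by (intro measure_eqI) (auto simp: refl_sets assms refl_emeasure symmetric_measure_def)
next
  assume "refl_meas M = M"
  then show "symmetric_measure M"
    unfolding symmetric_measure_def using refl_emeasure[OF assms] by metis
qed

lemma G_refl:
  assumes "sets M = sets borel"
  shows "cauchy_G (refl_meas M) z = - cnj (cauchy_G M (- cnj z))"
proof -
  have "cauchy_G (refl_meas M) z = (\<integral>x. 1 / (z - complex_of_real (- x)) \<partial>M)"
    unfolding cauchy_G_def refl_meas_def using assms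
    by (subst integral_distr) (auto simp: measurable_cong_sets[OF assms refl])
  also have "\<dots> = (\<integral>x. - cnj (1 / (- cnj z - complex_of_real x)) \<partial>M)"
  proof (intro Bochner_Integration.integral_cong refl)
    fix x
    have "cnj (1 / (- cnj z - complex_of_real x)) = 1 / (- z - complex_of_real x)"
      by simp
    also have "- z - complex_of_real x = - (z - complex_of_real (- x))"
      by simp
    also have "1 / (- (z - complex_of_real (- x))) = - (1 / (z - complex_of_real (- x)))"
      by (rule divide_minus_right)
    finally show "1 / (z - complex_of_real (- x)) = - cnj (1 / (- cnj z - complex_of_real x))" by simp
  qed
  also have "\<dots> = - cnj (cauchy_G M (- cnj z))"
    unfolding cauchy_G_def by (simp only: integral_minus Bochner_Integration.integral_cnj)
  finally show ?thesis .
qed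

lemma H_refl:
  assumes "sets M = sets borel"
  shows "cauchy_H (refl_meas M) z = - cnj (cauchy_H M (- cnj z))"
  unfolding cauchy_H_def G_refl[OF assms] by (simp add: divide_simps)


definition cK :: "real \<Rightarrow> real" where "cK v = 1 / (pi * (1 + v^2))"

lemma cK_pos: "cK v > 0"
  unfolding cK_def by (simp add: add_pos_nonneg)

lemma cK_integrable: "integrable lborel cK" and cK_integral: "(\<integral>v. cK v \<partial>lborel) = 1"
proof -
  have "set_integrable lborel (einterval (-\<infinity>) \<infinity>) (\<lambda>x::real. inverse (1 + x^2))"
    by (rule integrable_inverse_1_plus_square)
  then have i: "integrable lborel (\<lambda>x::real. inverse (1 + x^2))"
    by (simp add: set_integrable_def einterval_def)
  have e: "(\<integral>x. inverse (1 + x^2) \<partial>lborel) = pi"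
    using LBINT_inverse_1_plus_square
    by (simp add: interval_lebesgue_integral_def set_lebesgue_integral_def einterval_def)
  have eq: "cK = (\<lambda>x. inverse (1 + x^2) / pi)" by (auto simp: cK_def fun_eq_iff field_simps)
  show "integrable lborel cK" unfolding eq using i by simp
  show "(\<integral>v. cK v \<partial>lborel) = 1" unfolding eq using e by simp
qed

lemma cK_cont: "continuous_on UNIV cK"
  unfolding cK_def by (intro continuous_intros) (auto simp: add_pos_nonneg add_nonneg_eq_0_iff)


lemma neg_Im_G_eq:
  assumes fin: "finite_measure M" and sM: "sets M = sets borel" and y: "y > 0"
  shows "- Im (cauchy_G M (complex_of_real a + \<i> * complex_of_real y)) / pi
       = (\<integral>x. cK ((a - x) / y) / y \<partial>M)"
proof -
  define w where "w = complex_of_real a + \<i> * complex_of_real y"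
  have Imw: "Im w = y" by (simp add: w_def)
  have int: "integrable M (\<lambda>x. 1 / (w - complex_of_real x))"
    using kernel_integrable[OF fin sM] y Imw by simp
  have "Im (cauchy_G M w) = (\<integral>x. Im (1 / (w - complex_of_real x)) \<partial>M)"
    unfolding cauchy_G_def using int by simp
  also have "\<dots> = (\<integral>x. - (cK ((a - x) / y) / y * pi) \<partial>M)"
  proof (intro Bochner_Integration.integral_cong refl)
    fix x
    have c: "(cmod (w - complex_of_real x))^2 = (a - x)^2 + y^2"
      by (simp add: w_def cmod_def)
    have k: "cK ((a - x) / y) / y * pi = y / ((a - x)^2 + y^2)"
    proof -
      have d: "(a - x)^2 + y^2 > 0" using y by (simp add: add_nonneg_pos)
      have e1: "1 + ((a - x) / y)^2 = ((a - x)^2 + y^2) / y^2" using y by (simp add: field_simps)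
      have g: "1 / (pi * (D / y^2)) / y * pi = y / D" if "D > 0" for D
        using y that by (simp add: field_simps power2_eq_square)
      show ?thesis unfolding cK_def e1 by (rule g[OF d])
    qed
    show "Im (1 / (w - complex_of_real x)) = - (cK ((a - x) / y) / y * pi)"
      unfolding Im_kernel c Imw k by simp
  qed
  also have "\<dots> = - ((\<integral>x. cK ((a - x) / y) / y \<partial>M) * pi)"
    by (simp only: integral_minus integral_mult_left_zero)
  finally show ?thesis by (simp add: w_def)
qed

lemma kernel_lborel:
  assumes y: "y > 0"
  shows "integrable lborel (\<lambda>a. cK ((a - x) / y) / y)"
    and "(\<integral>a. cK ((a - x) / y) / y \<partial>lborel) = 1"
    and "\<And>f :: real \<Rightarrow> complex. (\<integral>a. f a * complex_of_real (cK ((a - x) / y) / y) \<partial>lborel)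
           = (\<integral>v. f (x + y * v) * complex_of_real (cK v) \<partial>lborel)"
proof -
  have yn: "y \<noteq> 0" using y by simp
  have e: "(\<lambda>v. cK ((x + y * v - x) / y) / y) = (\<lambda>v. cK v / y)"
    using yn by (auto simp: fun_eq_iff)
  show i: "integrable lborel (\<lambda>a. cK ((a - x) / y) / y)"
    using lborel_integrable_real_affine_iff[OF yn, of "\<lambda>a. cK ((a - x) / y) / y" x] e cK_integrable
    by simp
  show "(\<integral>a. cK ((a - x) / y) / y \<partial>lborel) = 1"
    using lborel_integral_real_affine[OF yn, of "\<lambda>a. cK ((a - x) / y) / y" x] e cK_integral y
    by simp
  fix f :: "real \<Rightarrow> complex"
  have "(\<integral>a. f a * complex_of_real (cK ((a - x) / y) / y) \<partial>lborel)
     = \<bar>y\<bar> *\<^sub>R (\<integral>v. f (x + y * v) * complex_of_real (cK ((x + y * v - x) / y) / y) \<partial>lborel)"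
    by (rule lborel_integral_real_affine[OF yn])
  also have "\<dots> = (\<integral>v. f (x + y * v) * complex_of_real (cK v) \<partial>lborel)"
    using y by (simp add: scaleR_conv_of_real mult_ac)
  finally show "(\<integral>a. f a * complex_of_real (cK ((a - x) / y) / y) \<partial>lborel)
           = (\<integral>v. f (x + y * v) * complex_of_real (cK v) \<partial>lborel)" .
qed


lemma poisson_limit:
  fixes \<phi> :: "real \<Rightarrow> complex"
  assumes fin: "finite_measure M" and sM: "sets M = sets borel"
    and cont: "continuous_on UNIV \<phi>" and bnd: "\<And>x. norm (\<phi> x) \<le> B"
  shows "(\<lambda>n. \<integral>a. \<phi> a * complex_of_real (- Im (cauchy_G M (complex_of_real a + \<i> * complex_of_real (1 / Suc n))) / pi) \<partial>lborel)
         \<longlonglongrightarrow> (\<integral>x. \<phi> x \<partial>M)"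
proof -
  interpret finite_measure M by fact
  interpret P: pair_sigma_finite M lborel
    by (intro pair_sigma_finite.intro) (simp_all add: sigma_finite_measure_axioms lborel.sigma_finite_measure_axioms)
  have phim[measurable]: "\<phi> \<in> borel_measurable borel" by (rule borel_measurable_continuous_onI[OF cont])
  have cKm[measurable]: "cK \<in> borel_measurable borel" by (rule borel_measurable_continuous_onI[OF cK_cont])
  note sM[measurable_cong]
  define y where "y n = 1 / real (Suc n)" for n
  have ypos: "y n > 0" for n by (simp add: y_def)
  have ylim: "y \<longlonglongrightarrow> 0" unfolding y_def by (rule LIMSEQ_inverse_real_of_nat[unfolded inverse_eq_divide])
  have B0: "B \<ge> 0" using bnd[of 0] norm_ge_zero order_trans by blast
  define g where "g n = (\<lambda>(x, a). \<phi> a * complex_of_real (cK ((a - x) / y n) / y n))" for n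
  have gm[measurable]: "g n \<in> borel_measurable (M \<Otimes>\<^sub>M lborel)" for n
    unfolding g_def by measurable
  have ng: "norm (g n (x, a)) \<le> B * (cK ((a - x) / y n) / y n)" for n x a
  proof -
    have "norm (g n (x, a)) = norm (\<phi> a) * (cK ((a - x) / y n) / y n)"
      unfolding g_def using cK_pos[of "(a - x) / y n"] ypos[of n] by (simp add: norm_mult norm_divide)
    also have "\<dots> \<le> B * (cK ((a - x) / y n) / y n)"
      using cK_pos[of "(a - x) / y n"] ypos[of n] bnd by (intro mult_right_mono) auto
    finally show ?thesis .
  qed
  have kB: "integrable lborel (\<lambda>a. B * (cK ((a - x) / y n) / y n))" for n x
    using kernel_lborel(1)[OF ypos[of n], of x] by (intro integrable_mult_right) auto
  have inner_int: "integrable lborel (\<lambda>a. g n (x, a))" for n x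
  proof (rule Bochner_Integration.integrable_bound)
    show "integrable lborel (\<lambda>a. B * (cK ((a - x) / y n) / y n))"
      using kernel_lborel(1)[OF ypos[of n], of x] by (intro integrable_mult_right) auto
    show "AE a in lborel. norm (g n (x, a)) \<le> norm (B * (cK ((a - x) / y n) / y n))"
      using ng[of n x] cK_pos ypos[of n] B0 by (intro AE_I2) (auto simp: abs_mult less_imp_le)
  qed (unfold g_def, simp)
  have gint: "integrable (M \<Otimes>\<^sub>M lborel) (g n)" for n
  proof (rule P.Fubini_integrable)
    show "integrable M (\<lambda>x. \<integral>a. norm (g n (x, a)) \<partial>lborel)"
    proof (rule integrable_const_bound[where B=B])
      show "AE x in M. norm (\<integral>a. norm (g n (x, a)) \<partial>lborel) \<le> B"
      proof (intro AE_I2)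
        fix x
        have "(\<integral>a. norm (g n (x, a)) \<partial>lborel) \<le> (\<integral>a. B * (cK ((a - x) / y n) / y n) \<partial>lborel)"
          using inner_int[of n x] ng[of n x]
          by (intro integral_mono kB) auto
        also have "\<dots> = B" using kernel_lborel(2)[OF ypos[of n], of x] by simp
        finally show "norm (\<integral>a. norm (g n (x, a)) \<partial>lborel) \<le> B"
          by (simp add: integral_nonneg_AE)
      qed
      show "(\<lambda>x. \<integral>a. norm (g n (x, a)) \<partial>lborel) \<in> borel_measurable M"
        by measurable
    qed
    show "AE x in M. integrable lborel (\<lambda>a. g n (x, a))" using inner_int by simp
  qed measurable
  define s where "s n x = (\<integral>v. \<phi> (x + y n * v) * complex_of_real (cK v) \<partial>lborel)" for n x
  have s_eq: "s n x = (\<integral>a. g n (x, a) \<partial>lborel)" for n x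
    unfolding s_def g_def using kernel_lborel(3)[OF ypos[of n], where x=x and f=\<phi>] by simp
  have lhs_eq: "(\<integral>a. \<phi> a * complex_of_real (- Im (cauchy_G M (complex_of_real a + \<i> * complex_of_real (1 / Suc n))) / pi) \<partial>lborel)
        = (\<integral>x. s n x \<partial>M)" for n
  proof -
    have "(\<integral>a. \<phi> a * complex_of_real (- Im (cauchy_G M (complex_of_real a + \<i> * complex_of_real (1 / Suc n))) / pi) \<partial>lborel)
        = (\<integral>a. (\<integral>x. g n (x, a) \<partial>M) \<partial>lborel)"
    proof (intro Bochner_Integration.integral_cong refl)
      fix a
      have "(\<integral>x. g n (x, a) \<partial>M) = \<phi> a * complex_of_real (\<integral>x. cK ((a - x) / y n) / y n \<partial>M)"
        unfolding g_def by simp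
      also have "\<dots> = \<phi> a * complex_of_real (- Im (cauchy_G M (complex_of_real a + \<i> * complex_of_real (y n))) / pi)"
        using neg_Im_G_eq[OF fin sM ypos[of n], of a] by simp
      finally show "\<phi> a * complex_of_real (- Im (cauchy_G M (complex_of_real a + \<i> * complex_of_real (1 / Suc n))) / pi)
           = (\<integral>x. g n (x, a) \<partial>M)" by (simp add: y_def)
    qed
    also have "\<dots> = (\<integral>x. (\<integral>a. g n (x, a) \<partial>lborel) \<partial>M)"
      using P.Fubini_integral[of "\<lambda>x a. g n (x, a)"] gint[of n] by simp
    finally show ?thesis by (simp add: s_eq)
  qed
  have slim: "(\<lambda>n. s n x) \<longlonglongrightarrow> \<phi> x" for x
  proof -
    have "(\<lambda>n. \<integral>v. \<phi> (x + y n * v) * complex_of_real (cK v) \<partial>lborel)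
          \<longlonglongrightarrow> (\<integral>v. \<phi> x * complex_of_real (cK v) \<partial>lborel)"
    proof (rule integral_dominated_convergence[where w="\<lambda>v. B * cK v"])
      show "integrable lborel (\<lambda>v. B * cK v)" using cK_integrable by simp
      show "AE v in lborel. (\<lambda>n. \<phi> (x + y n * v) * complex_of_real (cK v)) \<longlonglongrightarrow> \<phi> x * complex_of_real (cK v)"
      proof (intro AE_I2 tendsto_intros)
        fix v
        have "(\<lambda>n. x + y n * v) \<longlonglongrightarrow> x + 0 * v" by (intro tendsto_intros ylim)
        then show "(\<lambda>n. \<phi> (x + y n * v)) \<longlonglongrightarrow> \<phi> x"
          using cont by (auto intro: continuous_on_tendsto_compose[of UNIV \<phi>])
      qed
      show "AE v in lborel. norm (\<phi> (x + y n * v) * complex_of_real (cK v)) \<le> B * cK v" for n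
        using bnd cK_pos by (intro AE_I2) (auto simp: norm_mult abs_of_pos[OF cK_pos] intro!: mult_right_mono cK_pos[THEN less_imp_le])
    qed measurable
    also have "(\<integral>v. \<phi> x * complex_of_real (cK v) \<partial>lborel) = \<phi> x"
      using cK_integral by simp
    finally show ?thesis unfolding s_def .
  qed
  have "(\<lambda>n. \<integral>x. s n x \<partial>M) \<longlonglongrightarrow> (\<integral>x. \<phi> x \<partial>M)"
  proof (rule integral_dominated_convergence[where w="\<lambda>_. B"])
    show "s n \<in> borel_measurable M" for n
      unfolding s_eq[abs_def] by measurable
    show "AE x in M. norm (s n x) \<le> B" for n
    proof (intro AE_I2)
      fix x
      have "norm (s n x) \<le> (\<integral>a. norm (g n (x, a)) \<partial>lborel)"
        unfolding s_eq by (rule integral_norm_bound)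
      also have "\<dots> \<le> (\<integral>a. B * (cK ((a - x) / y n) / y n) \<partial>lborel)"
        using inner_int[of n x] ng[of n x]
        by (intro integral_mono kB) auto
      also have "\<dots> = B" using kernel_lborel(2)[OF ypos[of n], of x] by simp
      finally show "norm (s n x) \<le> B" .
    qed
  qed (use slim in auto)
  then show ?thesis by (simp only: lhs_eq)
qed


lemma integral_eq_from_G:
  fixes \<phi> :: "real \<Rightarrow> complex"
  assumes fM: "finite_measure M" "sets M = sets borel" and fN: "finite_measure N" "sets N = sets borel"
    and eq: "\<And>z. Im z > 0 \<Longrightarrow> cauchy_G M z = cauchy_G N z"
    and cont: "continuous_on UNIV \<phi>" and bnd: "\<And>x. norm (\<phi> x) \<le> B"
  shows "(\<integral>x. \<phi> x \<partial>M) = (\<integral>x. \<phi> x \<partial>N)"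
proof -
  have e: "cauchy_G M (complex_of_real a + \<i> * complex_of_real (1 / Suc n)) = cauchy_G N (complex_of_real a + \<i> * complex_of_real (1 / Suc n))" for a n
    by (rule eq) simp
  show ?thesis
    using poisson_limit[OF fM cont bnd] poisson_limit[OF fN cont bnd] unfolding e
    by (rule LIMSEQ_unique)
qed

lemma cauchy_unique:
  assumes fM: "finite_measure M" and sM: "sets M = sets borel"
    and fN: "finite_measure N" and sN: "sets N = sets borel"
    and eq: "\<And>z. Im z > 0 \<Longrightarrow> cauchy_G M z = cauchy_G N z"
  shows "M = N"
proof -
  interpret M: finite_measure M by fact
  interpret N: finite_measure N by fact
  have spM: "space M = UNIV" using sets_eq_imp_space_eq[OF sM] by simp
  have spN: "space N = UNIV" using sets_eq_imp_space_eq[OF sN] by simp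
  have ie: "(\<integral>x. \<phi> x \<partial>M) = (\<integral>x. \<phi> x \<partial>N)" if "continuous_on UNIV \<phi>" "\<And>x. norm (\<phi> x) \<le> B"
    for \<phi> :: "real \<Rightarrow> complex" and B
    by (rule integral_eq_from_G[OF fM sM fN sN eq that]) auto
  define m where "m = measure M (space M)"
  have mN: "measure N (space N) = m"
    using ie[of "\<lambda>_. 1" 1] by (simp add: m_def)
  have ch: "char M t = char N t" for t
    unfolding char_def by (rule ie[where B=1]) (auto intro!: continuous_intros simp: norm_exp_i_times[unfolded of_real_mult])
  show ?thesis
  proof (cases "m = 0")
    case True
    have z: "emeasure M A = 0" "emeasure N A = 0" for A
    proof -
      have "emeasure M A \<le> emeasure M (space M)" by (rule emeasure_space)
      also have "\<dots> = 0" using True M.emeasure_eq_measure unfolding m_def by simp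
      finally show "emeasure M A = 0" by simp
      have "emeasure N A \<le> emeasure N (space N)" by (rule emeasure_space)
      also have "\<dots> = 0" using True mN N.emeasure_eq_measure by simp
      finally show "emeasure N A = 0" by simp
    qed
    show ?thesis by (rule measure_eqI) (auto simp: sM sN z)
  next
    case False
    then have mpos: "m > 0" using measure_nonneg[of M "space M"] unfolding m_def by (simp add: less_le)
    define M' where "M' = density M (\<lambda>_. ennreal (1 / m))"
    define N' where "N' = density N (\<lambda>_. ennreal (1 / m))"
    have sM': "sets M' = sets borel" "sets N' = sets borel" by (simp_all add: M'_def N'_def sM sN)
    have emM': "emeasure M' A = ennreal (1/m) * emeasure M A" if "A \<in> sets borel" for A
      unfolding M'_def using that sM by (subst emeasure_density_const) auto
    have emN': "emeasure N' A = ennreal (1/m) * emeasure N A" if "A \<in> sets borel" for A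
      unfolding N'_def using that sN by (subst emeasure_density_const) auto
    have pM: "prob_space M'"
    proof
      have "emeasure M' (space M') = ennreal (1/m) * emeasure M UNIV"
        using emM'[of UNIV] sets_eq_imp_space_eq[OF sM'(1)] by simp
      also have "\<dots> = 1" using mpos M.emeasure_eq_measure[of UNIV] spM
        by (simp add: m_def ennreal_mult''[symmetric])
      finally show "emeasure M' (space M') = 1" .
    qed
    have pN: "prob_space N'"
    proof
      have "emeasure N' (space N') = ennreal (1/m) * emeasure N UNIV"
        using emN'[of UNIV] sets_eq_imp_space_eq[OF sM'(2)] by simp
      also have "\<dots> = 1" using mpos N.emeasure_eq_measure[of UNIV] spN mN
        by (simp add: ennreal_mult''[symmetric])
      finally show "emeasure N' (space N') = 1" .
    qed
    have rM: "real_distribution M'" using pM sM'(1) by (simp add: real_distribution_def real_distribution_axioms_def)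
    have rN: "real_distribution N'" using pN sM'(2) by (simp add: real_distribution_def real_distribution_axioms_def)
    have chM: "char M' t = (1/m) *\<^sub>R char M t" for t
      unfolding M'_def char_def using mpos
      by (subst integral_density) (auto simp: sM measurable_cong_sets[OF sM refl])
    have chN: "char N' t = (1/m) *\<^sub>R char N t" for t
      unfolding N'_def char_def using mpos
      by (subst integral_density) (auto simp: sN measurable_cong_sets[OF sN refl])
    have "M' = N'" by (rule Levy_uniqueness[OF rM rN]) (auto simp: fun_eq_iff chM chN ch)
    have "emeasure M A = emeasure N A" if "A \<in> sets borel" for A
    proof -
      have "ennreal (1/m) * emeasure M A = ennreal (1/m) * emeasure N A"
        using emM'[OF that] emN'[OF that] \<open>M' = N'\<close> by simp
      then have "ennreal m * (ennreal (1/m) * emeasure M A) = ennreal m * (ennreal (1/m) * emeasure N A)" by simp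
      moreover have "ennreal m * ennreal (1/m) = 1" using mpos by (simp add: ennreal_mult''[symmetric])
      ultimately show ?thesis by (simp add: mult.assoc[symmetric])
    qed
    then show ?thesis by (intro measure_eqI) (auto simp: sM sN)
  qed
qed


lemma space_borel_sets: "sets M = sets borel \<Longrightarrow> space M = UNIV"
  using sets_eq_imp_space_eq by fastforce

lemma gen_A_formula:
  assumes fin: "finite_measure \<tau>" and s: "sets \<tau> = sets borel" and z: "Im z \<noteq> 0"
  shows "gen_A \<gamma> \<tau> z = - complex_of_real \<gamma> + z * complex_of_real (measure \<tau> (space \<tau>))
           - (1 + z^2) * cauchy_G \<tau> z"
proof -
  interpret finite_measure \<tau> by fact
  have int: "integrable \<tau> (\<lambda>x. 1 / (z - complex_of_real x))"
    by (rule kernel_integrable[OF fin s z])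
  have nz: "complex_of_real x - z \<noteq> 0" for x using z by (auto simp: complex_eq_iff)
  have "(\<integral>x. (1 + complex_of_real x * z) / (complex_of_real x - z) \<partial>\<tau>)
      = (\<integral>x. z - (1 + z^2) * (1 / (z - complex_of_real x)) \<partial>\<tau>)"
  proof (intro Bochner_Integration.integral_cong refl)
    fix x
    have nz': "z - complex_of_real x \<noteq> 0" using z by (auto simp: complex_eq_iff)
    show "(1 + complex_of_real x * z) / (complex_of_real x - z) = z - (1 + z^2) * (1 / (z - complex_of_real x))"
    proof -
      have a1: "1 / (z - complex_of_real x) = - (1 / (complex_of_real x - z))"
        by (metis divide_minus_right minus_diff_eq)
      have a2: "w + c / d = (w * d + c) / d" if "d \<noteq> 0" for w c d :: complex
        using that by (simp add: field_simps)
      have a3: "z * (complex_of_real x - z) + (1 + z^2) = 1 + complex_of_real x * z"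
        by (simp add: algebra_simps power2_eq_square)
      show ?thesis unfolding a1 using a2[OF nz[of x], of z "1 + z^2"] a3 by simp
    qed
  qed
  also have "\<dots> = z * complex_of_real (measure \<tau> (space \<tau>)) - (1 + z^2) * cauchy_G \<tau> z"
  proof -
    have "(\<integral>x. z - (1 + z^2) * (1 / (z - complex_of_real x)) \<partial>\<tau>)
        = (\<integral>x. z \<partial>\<tau>) - (\<integral>x. (1 + z^2) * (1 / (z - complex_of_real x)) \<partial>\<tau>)"
      using int by (intro Bochner_Integration.integral_diff integrable_mult_right) auto
    also have "\<dots> = z * complex_of_real (measure \<tau> (space \<tau>)) - (1 + z^2) * cauchy_G \<tau> z"
      unfolding cauchy_G_def by (simp add: scaleR_conv_of_real del: times_divide_eq_right)
    finally show ?thesis .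
  qed
  finally show ?thesis unfolding gen_A_def by simp
qed


lemma A_sym_point:
  assumes fin: "finite_measure \<tau>" and s: "sets \<tau> = sets borel" and z: "Im z > 0"
  shows "(gen_A \<gamma> \<tau> (- cnj z) = - cnj (gen_A \<gamma> \<tau> z)) \<longleftrightarrow>
         (- complex_of_real \<gamma> + (1 + z^2) * cauchy_G (refl_meas \<tau>) z = complex_of_real \<gamma> + (1 + z^2) * cauchy_G \<tau> z)"
proof -
  define m where "m = complex_of_real (measure \<tau> (space \<tau>))"
  define Gr where "Gr = cauchy_G (refl_meas \<tau>) z"
  define G where "G = cauchy_G \<tau> z"
  have w: "Im (- cnj z) \<noteq> 0" using z by simp
  have z0: "Im z \<noteq> 0" using z by simp
  have gr: "cnj (cauchy_G \<tau> (- cnj z)) = - Gr"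
    using G_refl[OF s, of z] by (simp add: Gr_def)
  have cm: "cnj m = m" by (simp add: m_def)
  have e1: "(gen_A \<gamma> \<tau> (- cnj z) = - cnj (gen_A \<gamma> \<tau> z)) \<longleftrightarrow> (cnj (gen_A \<gamma> \<tau> (- cnj z)) = - gen_A \<gamma> \<tau> z)"
    by (auto dest: arg_cong[where f=cnj])
  have "cnj (gen_A \<gamma> \<tau> (- cnj z)) = cnj (- complex_of_real \<gamma> + (- cnj z) * m - (1 + (- cnj z)^2) * cauchy_G \<tau> (- cnj z))"
    by (simp only: gen_A_formula[OF fin s w] m_def)
  also have "\<dots> = - complex_of_real \<gamma> - z * cnj m - (1 + z^2) * cnj (cauchy_G \<tau> (- cnj z))"
    by simp
  also have "\<dots> = - complex_of_real \<gamma> - z * m + (1 + z^2) * Gr"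
    unfolding gr cm by simp
  finally have e2: "cnj (gen_A \<gamma> \<tau> (- cnj z)) = - complex_of_real \<gamma> - z * m + (1 + z^2) * Gr" .
  have e3: "- gen_A \<gamma> \<tau> z = complex_of_real \<gamma> - z * m + (1 + z^2) * G"
    by (simp only: gen_A_formula[OF fin s z0] m_def G_def) simp
  have e4: "(a - zm + b = c - zm + d) \<longleftrightarrow> (a + b = c + d)" for a b c d zm :: complex
    by (auto simp: algebra_simps)
  show ?thesis unfolding e1 e2 e3 e4 Gr_def G_def by simp
qed

lemma upper_half_connected: "connected {z::complex. Im z > 0}" and upper_half_open: "open {z::complex. Im z > 0}"
  by (simp_all add: convex_connected convex_halfspace_Im_gt open_halfspace_Im_gt)

lemma A_sym_imp:
  assumes fin: "finite_measure \<tau>" and s: "sets \<tau> = sets borel"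
    and sym: "\<And>z. Im z > 0 \<Longrightarrow> gen_A \<gamma> \<tau> (- cnj z) = - cnj (gen_A \<gamma> \<tau> z)"
  shows "\<gamma> = 0 \<and> symmetric_measure \<tau>"
proof -
  have key: "- complex_of_real \<gamma> + (1 + z^2) * cauchy_G (refl_meas \<tau>) z = complex_of_real \<gamma> + (1 + z^2) * cauchy_G \<tau> z"
    if "Im z > 0" for z
    using A_sym_point[OF fin s that] sym[OF that] by simp
  have "- complex_of_real \<gamma> = complex_of_real \<gamma>" using key[of \<i>] by simp
  then have g: "\<gamma> = 0" by simp
  have eq: "cauchy_G (refl_meas \<tau>) z = cauchy_G \<tau> z" if "Im z > 2" for z
  proof -
    have nz: "1 + z^2 \<noteq> 0"
    proof
      assume "1 + z^2 = 0"
      then have "Im (1 + z^2) = 0" "Re (1 + z^2) = 0" by simp_all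
      then have "2 * Re z * Im z = 0" "1 + (Re z)^2 - (Im z)^2 = 0"
        by (auto simp: power2_eq_square)
      moreover have "Im z > 0" using that by simp
      ultimately have "Re z = 0" by simp
      with \<open>1 + (Re z)^2 - (Im z)^2 = 0\<close> have "(Im z)^2 = 1" by simp
      moreover have "(Im z)^2 > 2^2" using that by (intro power_strict_mono) auto
      ultimately show False by simp
    qed
    have "(1 + z^2) * cauchy_G (refl_meas \<tau>) z = (1 + z^2) * cauchy_G \<tau> z"
      using key[of z] that g by simp
    then show ?thesis using nz by simp
  qed
  have eqall: "cauchy_G (refl_meas \<tau>) z = cauchy_G \<tau> z" if "Im z > 0" for z
  proof (rule analytic_continuation_open[where s="{z. Im z > 2}" and s'="{z. Im z > 0}"
        and f="cauchy_G (refl_meas \<tau>)" and g="cauchy_G \<tau>"])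
    show "open {z::complex. 2 < Im z}" by (simp add: open_halfspace_Im_gt)
    show "{z::complex. 2 < Im z} \<noteq> {}" by (auto intro: exI[of _ "3 * \<i>"])
    show "{z::complex. 2 < Im z} \<subseteq> {z. 0 < Im z}" by auto
    show "cauchy_G (refl_meas \<tau>) holomorphic_on {z. 0 < Im z}"
      by (rule G_holo[OF refl_finite[OF fin s] refl_sets])
    show "cauchy_G \<tau> holomorphic_on {z. 0 < Im z}" by (rule G_holo[OF fin s])
  qed (use eq that upper_half_open upper_half_connected in auto)
  have "refl_meas \<tau> = \<tau>"
    by (rule cauchy_unique[OF refl_finite[OF fin s] refl_sets fin s eqall])
  then show ?thesis using g symmetric_iff_refl[OF s] by simp
qed

lemma sym_imp_A_sym:
  assumes fin: "finite_measure \<tau>" and s: "sets \<tau> = sets borel"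
    and g: "\<gamma> = 0" and sym: "symmetric_measure \<tau>" and z: "Im z > 0"
  shows "gen_A \<gamma> \<tau> (- cnj z) = - cnj (gen_A \<gamma> \<tau> z)"
proof -
  have "refl_meas \<tau> = \<tau>" using sym symmetric_iff_refl[OF s] by simp
  then show ?thesis using A_sym_point[OF fin s z] g by simp
qed


lemma dq_limit:
  fixes f :: "real \<Rightarrow> complex"
  assumes d: "(f has_vector_derivative D) (at 0 within {0..})" and t: "t \<longlonglongrightarrow> 0" and tp: "\<And>n. t n > 0"
  shows "(\<lambda>n. (f (t n) - f 0) / complex_of_real (t n)) \<longlonglongrightarrow> D"
proof -
  have A: "((\<lambda>y. (1 / norm (y - 0)) *\<^sub>R (f y - (f 0 + (y - 0) *\<^sub>R D))) \<longlongrightarrow> 0) (at 0 within {0..})"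
    using d unfolding has_vector_derivative_def has_derivative_within by simp
  have B: "filterlim t (at 0 within {0..}) sequentially"
    unfolding filterlim_at using t tp by (auto intro!: always_eventually less_imp_le simp: less_imp_neq[symmetric])
  have "(\<lambda>n. (1 / norm (t n - 0)) *\<^sub>R (f (t n) - (f 0 + (t n - 0) *\<^sub>R D))) \<longlonglongrightarrow> 0"
    using filterlim_compose[OF A B] .
  moreover have "(1 / norm (t n - 0)) *\<^sub>R (f (t n) - (f 0 + (t n - 0) *\<^sub>R D))
      = (f (t n) - f 0) / complex_of_real (t n) - D" for n
    using tp[of n] by (simp add: scaleR_conv_of_real field_simps)
  ultimately have "(\<lambda>n. (f (t n) - f 0) / complex_of_real (t n) - D) \<longlonglongrightarrow> 0" by simp
  then show ?thesis by (rule LIM_zero_cancel)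
qed


lemma ode_unique:
  fixes X Y :: "real \<Rightarrow> complex" and F :: "complex \<Rightarrow> complex"
  assumes dX: "\<And>t. t \<ge> 0 \<Longrightarrow> (X has_vector_derivative F (X t)) (at t within {0..})"
    and dY: "\<And>t. t \<ge> 0 \<Longrightarrow> (Y has_vector_derivative F (Y t)) (at t within {0..})"
    and X0: "X 0 = Y 0"
    and pX: "\<And>t. t \<ge> 0 \<Longrightarrow> Im (X t) > 0" and pY: "\<And>t. t \<ge> 0 \<Longrightarrow> Im (Y t) > 0"
    and lip: "\<And>c R. c > 0 \<Longrightarrow> \<exists>L. \<forall>w1 w2. Im w1 \<ge> c \<longrightarrow> Im w2 \<ge> c \<longrightarrow> cmod w1 \<le> R \<longrightarrow> cmod w2 \<le> R
                \<longrightarrow> cmod (F w1 - F w2) \<le> L * cmod (w1 - w2)"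
    and T: "T \<ge> 0"
  shows "X T = Y T"
proof -
  have cX: "continuous_on {0..} X"
    by (rule continuous_on_vector_derivative) (use dX in auto)
  have cY: "continuous_on {0..} Y"
    by (rule continuous_on_vector_derivative) (use dY in auto)
  define I where "I = {0..T}"
  have I: "compact I" "I \<noteq> {}" "I \<subseteq> {0..}" using T by (auto simp: I_def)
  have cXI: "continuous_on I X" and cYI: "continuous_on I Y"
    using cX cY I(3) continuous_on_subset by blast+
  obtain t1 where t1: "t1 \<in> I" "\<And>t. t \<in> I \<Longrightarrow> Im (X t1) \<le> Im (X t)"
    using continuous_attains_inf[OF I(1,2), of "\<lambda>t. Im (X t)"] cXI
    by (auto intro: continuous_intros)
  obtain t2 where t2: "t2 \<in> I" "\<And>t. t \<in> I \<Longrightarrow> Im (Y t2) \<le> Im (Y t)"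
    using continuous_attains_inf[OF I(1,2), of "\<lambda>t. Im (Y t)"] cYI
    by (auto intro: continuous_intros)
  obtain t3 where t3: "t3 \<in> I" "\<And>t. t \<in> I \<Longrightarrow> cmod (X t) \<le> cmod (X t3)"
    using continuous_attains_sup[OF I(1,2), of "\<lambda>t. cmod (X t)"] cXI
    by (auto intro: continuous_intros)
  obtain t4 where t4: "t4 \<in> I" "\<And>t. t \<in> I \<Longrightarrow> cmod (Y t) \<le> cmod (Y t4)"
    using continuous_attains_sup[OF I(1,2), of "\<lambda>t. cmod (Y t)"] cYI
    by (auto intro: continuous_intros)
  define c where "c = min (Im (X t1)) (Im (Y t2))"
  define R where "R = max (cmod (X t3)) (cmod (Y t4))"
  have c: "c > 0" using pX[of t1] pY[of t2] t1(1) t2(1) by (auto simp: c_def I_def)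
  obtain L0 where L0: "\<And>w1 w2. Im w1 \<ge> c \<Longrightarrow> Im w2 \<ge> c \<Longrightarrow> cmod w1 \<le> R \<Longrightarrow> cmod w2 \<le> R
                \<Longrightarrow> cmod (F w1 - F w2) \<le> L0 * cmod (w1 - w2)"
    using lip[OF c, of R] by blast
  define L where "L = \<bar>L0\<bar> + 1"
  have Lpos: "L > 0" by (simp add: L_def)
  have FL: "cmod (F (X t) - F (Y t)) \<le> L * cmod (X t - Y t)" if "t \<in> I" for t
  proof -
    have "cmod (F (X t) - F (Y t)) \<le> L0 * cmod (X t - Y t)"
    proof (rule L0)
      show "c \<le> Im (X t)" using t1(2)[OF that] by (simp add: c_def)
      show "c \<le> Im (Y t)" using t2(2)[OF that] by (simp add: c_def)
      show "cmod (X t) \<le> R" using t3(2)[OF that] by (simp add: R_def)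
      show "cmod (Y t) \<le> R" using t4(2)[OF that] by (simp add: R_def)
    qed
    also have "\<dots> \<le> L * cmod (X t - Y t)"
      unfolding L_def by (intro mult_right_mono) auto
    finally show ?thesis .
  qed
  define h where "h = 1 / (2 * L)"
  have hpos: "h > 0" using Lpos by (simp add: h_def)
  have Lh: "L * h = 1 / 2" using Lpos by (simp add: h_def)
  have claim: "\<forall>t\<in>I. t \<le> real k * h \<longrightarrow> X t = Y t" for k :: nat
  proof (induction k)
    case 0
    then show ?case using X0 by (auto simp: I_def)
  next
    case (Suc k)
    define a where "a = real k * h"
    have a0: "a \<ge> 0" using hpos by (simp add: a_def)
    show ?case
    proof (cases "a \<le> T")
      case False
      then show ?thesis using Suc.IH by (auto simp: I_def a_def)
    next
      case True
      define b where "b = min T (a + h)"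
      define S where "S = {a..b}"
      have SI: "S \<subseteq> I" using a0 by (auto simp: S_def I_def b_def)
      have aS: "a \<in> S" using True hpos by (simp add: S_def b_def)
      have Za: "X a = Y a" using Suc.IH aS SI by (auto simp: a_def)
      have cS: "continuous_on S (\<lambda>t. cmod (X t - Y t))"
        using cXI cYI SI by (intro continuous_intros) (auto intro: continuous_on_subset)
      obtain s0 where s0: "s0 \<in> S" "\<And>t. t \<in> S \<Longrightarrow> cmod (X t - Y t) \<le> cmod (X s0 - Y s0)"
        using continuous_attains_sup[OF _ _ cS] aS by (auto simp: S_def)
      define Mx where "Mx = cmod (X s0 - Y s0)"
      have bnd: "cmod (X t - Y t) \<le> L * Mx * \<bar>t - a\<bar>" if "t \<in> S" for t
      proof -
        have "cmod ((X t - Y t) - (X a - Y a)) \<le> (L * Mx) * norm (t - a)"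
        proof (rule differentiable_bound[where f="\<lambda>t. X t - Y t" and S=S
              and f'="\<lambda>t h. h *\<^sub>R (F (X t) - F (Y t))"])
          show "convex S" by (simp add: S_def)
          show "((\<lambda>t. X t - Y t) has_derivative (\<lambda>h. h *\<^sub>R (F (X x) - F (Y x)))) (at x within S)"
            if "x \<in> S" for x
          proof -
            have x0: "x \<ge> 0" using that SI by (auto simp: I_def)
            have "((\<lambda>t. X t - Y t) has_vector_derivative F (X x) - F (Y x)) (at x within {0..})"
              by (intro has_vector_derivative_diff dX dY x0)
            then have "((\<lambda>t. X t - Y t) has_vector_derivative F (X x) - F (Y x)) (at x within S)"
              by (rule has_vector_derivative_within_subset) (use SI in \<open>auto simp: I_def\<close>)
            then show ?thesis by (simp add: has_vector_derivative_def)
          qed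
          show "onorm (\<lambda>h. h *\<^sub>R (F (X x) - F (Y x))) \<le> L * Mx" if "x \<in> S" for x
          proof -
            have "onorm (\<lambda>h::real. h *\<^sub>R (F (X x) - F (Y x))) = norm (F (X x) - F (Y x))"
              using onorm_scaleR_left[OF bounded_linear_ident, of "F (X x) - F (Y x)"] by (simp add: onorm_id)
            also have "\<dots> \<le> L * cmod (X x - Y x)" using FL that SI by auto
            also have "\<dots> \<le> L * Mx" using s0(2)[OF that] Lpos by (simp add: Mx_def)
            finally show ?thesis .
          qed
        qed (use that aS in auto)
        then show ?thesis using Za by simp
      qed
      have "Mx \<le> L * Mx * h"
      proof -
        have "Mx \<le> L * Mx * \<bar>s0 - a\<bar>" using bnd[OF s0(1)] by (simp add: Mx_def)
        also have "\<dots> \<le> L * Mx * h"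
        proof (intro mult_left_mono)
          show "\<bar>s0 - a\<bar> \<le> h" using s0(1) by (auto simp: S_def b_def)
          show "0 \<le> L * Mx" using Lpos by (simp add: Mx_def)
        qed
        finally show ?thesis .
      qed
      also have "L * Mx * h = Mx / 2" using Lh by (simp add: algebra_simps)
      finally have "Mx \<le> Mx / 2" .
      then have M0: "Mx = 0" using norm_ge_zero[of "X s0 - Y s0"] by (simp add: Mx_def)
      show ?thesis
      proof (intro ballI impI)
        fix t assume tI: "t \<in> I" and tk: "t \<le> real (Suc k) * h"
        show "X t = Y t"
        proof (cases "t \<le> a")
          case True
          then show ?thesis using Suc.IH tI by (auto simp: a_def)
        next
          case False
          then have "t \<in> S" using tI tk by (auto simp: S_def b_def I_def a_def algebra_simps)
          then show ?thesis using s0(2)[of t] M0 by (simp add: Mx_def)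
        qed
      qed
    qed
  qed
  obtain k :: nat where "T / h < real k" using reals_Archimedean2 by blast
  then have "T \<le> real k * h" using hpos by (simp add: field_simps)
  then show ?thesis using claim[of k] T by (auto simp: I_def)
qed


lemma G_norm_le:
  assumes fin: "finite_measure M" and s: "sets M = sets borel" and w: "Im w \<ge> c" and c: "c > 0"
  shows "cmod (cauchy_G M w) \<le> measure M (space M) / c"
proof -
  interpret finite_measure M by fact
  have w0: "Im w \<noteq> 0" using w c by simp
  have "cmod (cauchy_G M w) \<le> (\<integral>x. cmod (1 / (w - complex_of_real x)) \<partial>M)"
    unfolding cauchy_G_def by (rule integral_norm_bound)
  also have "\<dots> \<le> (\<integral>x. 1 / c \<partial>M)"
  proof (rule integral_mono)
    show "integrable M (\<lambda>x. cmod (1 / (w - complex_of_real x)))"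
      using kernel_integrable[OF fin s w0] by simp
    show "integrable M (\<lambda>x. 1 / c)" by simp
    fix x
    have "cmod (1 / (w - complex_of_real x)) \<le> 1 / \<bar>Im w\<bar>" by (rule kernel_norm_le[OF w0])
    also have "\<dots> \<le> 1 / c" using w c by (intro divide_left_mono) auto
    finally show "cmod (1 / (w - complex_of_real x)) \<le> 1 / c" .
  qed
  finally show ?thesis by simp
qed

lemma G_lip:
  assumes fin: "finite_measure M" and s: "sets M = sets borel"
    and w1: "Im w1 \<ge> c" and w2: "Im w2 \<ge> c" and c: "c > 0"
  shows "cmod (cauchy_G M w1 - cauchy_G M w2) \<le> measure M (space M) / c^2 * cmod (w1 - w2)"
proof -
  interpret finite_measure M by fact
  have w10: "Im w1 \<noteq> 0" and w20: "Im w2 \<noteq> 0" using w1 w2 c by auto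
  have i1: "integrable M (\<lambda>x. 1 / (w1 - complex_of_real x))" by (rule kernel_integrable[OF fin s w10])
  have i2: "integrable M (\<lambda>x. 1 / (w2 - complex_of_real x))" by (rule kernel_integrable[OF fin s w20])
  have "cauchy_G M w1 - cauchy_G M w2 = (\<integral>x. 1 / (w1 - complex_of_real x) - 1 / (w2 - complex_of_real x) \<partial>M)"
    unfolding cauchy_G_def using i1 i2 by simp
  also have "cmod \<dots> \<le> (\<integral>x. cmod (1 / (w1 - complex_of_real x) - 1 / (w2 - complex_of_real x)) \<partial>M)"
    by (rule integral_norm_bound)
  also have "\<dots> \<le> (\<integral>x. cmod (w1 - w2) / c^2 \<partial>M)"
  proof (rule integral_mono)
    show "integrable M (\<lambda>x. cmod (1 / (w1 - complex_of_real x) - 1 / (w2 - complex_of_real x)))"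
      using i1 i2 by auto
    show "integrable M (\<lambda>x. cmod (w1 - w2) / c^2)" by simp
    fix x
    have n1: "cmod (w1 - complex_of_real x) \<ge> c"
      using abs_Im_le_cmod[of "w1 - complex_of_real x"] w1 by simp
    have n2: "cmod (w2 - complex_of_real x) \<ge> c"
      using abs_Im_le_cmod[of "w2 - complex_of_real x"] w2 by simp
    have nz1: "w1 - complex_of_real x \<noteq> 0" and nz2: "w2 - complex_of_real x \<noteq> 0" using n1 n2 c by auto
    have "1 / (w1 - complex_of_real x) - 1 / (w2 - complex_of_real x)
        = (w2 - w1) / ((w1 - complex_of_real x) * (w2 - complex_of_real x))"
      using nz1 nz2 by (simp add: field_simps)
    also have "cmod \<dots> \<le> cmod (w1 - w2) / (c * c)"
      unfolding norm_divide norm_mult using n1 n2 c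
      by (intro frac_le mult_mono) (auto simp: norm_minus_commute)
    finally show "cmod (1 / (w1 - complex_of_real x) - 1 / (w2 - complex_of_real x)) \<le> cmod (w1 - w2) / c^2"
      by (simp add: power2_eq_square)
  qed
  also have "\<dots> = measure M (space M) / c^2 * cmod (w1 - w2)" by simp
  finally show ?thesis .
qed

lemma gen_A_lip:
  assumes fin: "finite_measure \<tau>" and s: "sets \<tau> = sets borel" and c: "c > 0"
  shows "\<exists>L. \<forall>w1 w2. Im w1 \<ge> c \<longrightarrow> Im w2 \<ge> c \<longrightarrow> cmod w1 \<le> R \<longrightarrow> cmod w2 \<le> R
                \<longrightarrow> cmod (gen_A \<gamma> \<tau> w1 - gen_A \<gamma> \<tau> w2) \<le> L * cmod (w1 - w2)"
proof -
  define m where "m = measure \<tau> (space \<tau>)"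
  have m0: "m \<ge> 0" by (simp add: m_def)
  define L where "L = m + 2 * \<bar>R\<bar> * (m / c) + (1 + R^2) * (m / c^2)"
  show ?thesis
  proof (intro exI[of _ L] allI impI)
    fix w1 w2 :: complex
    assume w1: "Im w1 \<ge> c" and w2: "Im w2 \<ge> c" and r1: "cmod w1 \<le> R" and r2: "cmod w2 \<le> R"
    have w10: "Im w1 \<noteq> 0" and w20: "Im w2 \<noteq> 0" using w1 w2 c by auto
    define G1 where "G1 = cauchy_G \<tau> w1"
    define G2 where "G2 = cauchy_G \<tau> w2"
    have eq: "gen_A \<gamma> \<tau> w1 - gen_A \<gamma> \<tau> w2
        = (w1 - w2) * complex_of_real m - ((w1 - w2) * (w1 + w2)) * G1 - (1 + w2^2) * (G1 - G2)"
      unfolding gen_A_formula[OF fin s w10] gen_A_formula[OF fin s w20] m_def[symmetric] G1_def[symmetric] G2_def[symmetric]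
      by (simp add: algebra_simps power2_eq_square)
    have nG1: "cmod G1 \<le> m / c" unfolding G1_def m_def by (rule G_norm_le[OF fin s w1 c])
    have dG: "cmod (G1 - G2) \<le> m / c^2 * cmod (w1 - w2)" unfolding G1_def G2_def m_def by (rule G_lip[OF fin s w1 w2 c])
    have R0: "cmod w1 \<le> \<bar>R\<bar>" "cmod w2 \<le> \<bar>R\<bar>" using r1 r2 by auto
    have s12: "cmod (w1 + w2) \<le> 2 * \<bar>R\<bar>" using norm_triangle_ineq[of w1 w2] R0 by simp
    have s2: "cmod (1 + w2^2) \<le> 1 + R^2"
    proof -
      have "cmod (1 + w2^2) \<le> 1 + cmod w2 ^ 2" using norm_triangle_ineq[of 1 "w2^2"] by (simp add: norm_power)
      also have "cmod w2 ^ 2 \<le> R^2" using R0(2) by (metis abs_le_square_iff abs_norm_cancel power2_abs)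
      finally show ?thesis by simp
    qed
    have "cmod (gen_A \<gamma> \<tau> w1 - gen_A \<gamma> \<tau> w2)
        \<le> cmod ((w1 - w2) * complex_of_real m) + cmod (((w1 - w2) * (w1 + w2)) * G1) + cmod ((1 + w2^2) * (G1 - G2))"
      unfolding eq by (rule order_trans[OF norm_triangle_ineq4]) (rule add_right_mono[OF norm_triangle_ineq4])
    also have "\<dots> \<le> cmod (w1 - w2) * m + cmod (w1 - w2) * (2 * \<bar>R\<bar>) * (m / c) + (1 + R^2) * (m / c^2 * cmod (w1 - w2))"
    proof (intro add_mono)
      show "cmod ((w1 - w2) * complex_of_real m) \<le> cmod (w1 - w2) * m" using m0 by (simp add: norm_mult)
      show "cmod ((w1 - w2) * (w1 + w2) * G1) \<le> cmod (w1 - w2) * (2 * \<bar>R\<bar>) * (m / c)"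
        unfolding norm_mult using s12 nG1 by (intro mult_mono) auto
      show "cmod ((1 + w2^2) * (G1 - G2)) \<le> (1 + R^2) * (m / c^2 * cmod (w1 - w2))"
        unfolding norm_mult using s2 dG by (intro mult_mono) auto
    qed
    also have "\<dots> = L * cmod (w1 - w2)" by (simp add: L_def algebra_simps)
    finally show "cmod (gen_A \<gamma> \<tau> w1 - gen_A \<gamma> \<tau> w2) \<le> L * cmod (w1 - w2)" .
  qed
qed


lemma sg_basic:
  assumes "monotone_conv_semigroup \<mu>" "t \<ge> 0"
  shows "prob_space (\<mu> t)" "sets (\<mu> t) = sets borel" "finite_measure (\<mu> t)"
    "emeasure (\<mu> t) (space (\<mu> t)) \<noteq> 0"
proof -
  show p: "prob_space (\<mu> t)" and s: "sets (\<mu> t) = sets borel"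
    using assms unfolding monotone_conv_semigroup_def real_prob_measure_def by auto
  show "finite_measure (\<mu> t)" using p by (simp add: prob_space_def)
  show "emeasure (\<mu> t) (space (\<mu> t)) \<noteq> 0" using p by (simp add: prob_space.emeasure_space_1)
qed

lemma ap_basic:
  assumes "associated_pair \<mu> \<gamma> \<tau>"
  shows "finite_measure \<tau>" "sets \<tau> = sets borel"
    "\<And>z. Im z \<noteq> 0 \<Longrightarrow> cauchy_H (\<mu> 0) z = z"
    "\<And>z t. Im z \<noteq> 0 \<Longrightarrow> t \<ge> 0 \<Longrightarrow> ((\<lambda>s. cauchy_H (\<mu> s) z) has_vector_derivative
                   gen_A \<gamma> \<tau> (cauchy_H (\<mu> t) z)) (at t within {0..})"
  using assms unfolding associated_pair_def by auto

lemma sym_H: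
  assumes "monotone_conv_semigroup \<mu>" "t \<ge> 0" "symmetric_measure (\<mu> t)"
  shows "cauchy_H (\<mu> t) (- cnj z) = - cnj (cauchy_H (\<mu> t) z)"
proof -
  have s: "sets (\<mu> t) = sets borel" using sg_basic[OF assms(1,2)] by simp
  have "refl_meas (\<mu> t) = \<mu> t" using assms(3) symmetric_iff_refl[OF s] by simp
  then show ?thesis using H_refl[OF s, of "- cnj z"] by simp
qed

lemma A_sym_from_seq:
  assumes sg: "monotone_conv_semigroup \<mu>" and ap: "associated_pair \<mu> \<gamma> \<tau>"
    and t: "t \<longlonglongrightarrow> 0" and tp: "\<And>n. t n > 0" and sym: "\<And>n. symmetric_measure (\<mu> (t n))"
    and z: "Im z > 0"
  shows "gen_A \<gamma> \<tau> (- cnj z) = - cnj (gen_A \<gamma> \<tau> z)"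
proof -
  have lim: "(\<lambda>n. (cauchy_H (\<mu> (t n)) w - w) / complex_of_real (t n)) \<longlonglongrightarrow> gen_A \<gamma> \<tau> w"
    if w: "Im w \<noteq> 0" for w
  proof -
    have "(\<lambda>n. (cauchy_H (\<mu> (t n)) w - cauchy_H (\<mu> 0) w) / complex_of_real (t n)) \<longlonglongrightarrow> gen_A \<gamma> \<tau> (cauchy_H (\<mu> 0) w)"
      by (rule dq_limit[OF ap_basic(4)[OF ap w order_refl] t tp])
    then show ?thesis using ap_basic(3)[OF ap w] by simp
  qed
  have z0: "Im z \<noteq> 0" and z1: "Im (- cnj z) \<noteq> 0" using z by auto
  have "(\<lambda>n. - cnj ((cauchy_H (\<mu> (t n)) z - z) / complex_of_real (t n))) \<longlonglongrightarrow> - cnj (gen_A \<gamma> \<tau> z)"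
    by (intro tendsto_intros lim z0)
  moreover have "(\<lambda>n. - cnj ((cauchy_H (\<mu> (t n)) z - z) / complex_of_real (t n)))
       = (\<lambda>n. (cauchy_H (\<mu> (t n)) (- cnj z) - (- cnj z)) / complex_of_real (t n))"
  proof
    fix n
    have "cauchy_H (\<mu> (t n)) (- cnj z) = - cnj (cauchy_H (\<mu> (t n)) z)"
      by (rule sym_H[OF sg less_imp_le[OF tp] sym])
    then show "- cnj ((cauchy_H (\<mu> (t n)) z - z) / complex_of_real (t n))
       = (cauchy_H (\<mu> (t n)) (- cnj z) - (- cnj z)) / complex_of_real (t n)"
      by (simp add: minus_divide_left)
  qed
  ultimately have "(\<lambda>n. (cauchy_H (\<mu> (t n)) (- cnj z) - (- cnj z)) / complex_of_real (t n)) \<longlonglongrightarrow> - cnj (gen_A \<gamma> \<tau> z)"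
    by simp
  from LIMSEQ_unique[OF lim[OF z1] this] show ?thesis .
qed

lemma sym_from_A_sym:
  assumes sg: "monotone_conv_semigroup \<mu>" and ap: "associated_pair \<mu> \<gamma> \<tau>"
    and As: "\<And>z. Im z > 0 \<Longrightarrow> gen_A \<gamma> \<tau> (- cnj z) = - cnj (gen_A \<gamma> \<tau> z)"
    and T: "T \<ge> 0"
  shows "symmetric_measure (\<mu> T)"
proof -
  note fT = sg_basic[OF sg T]
  have Heq: "cauchy_H (\<mu> T) z = - cnj (cauchy_H (\<mu> T) (- cnj z))" if z: "Im z > 0" for z
  proof (rule ode_unique[where F="gen_A \<gamma> \<tau>"])
    have z0: "Im z \<noteq> 0" and z1: "Im (- cnj z) \<noteq> 0" using z by auto
    show "((\<lambda>s. cauchy_H (\<mu> s) z) has_vector_derivative gen_A \<gamma> \<tau> (cauchy_H (\<mu> t) z)) (at t within {0..})"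
      if "t \<ge> 0" for t by (rule ap_basic(4)[OF ap z0 that])
    show "((\<lambda>s. - cnj (cauchy_H (\<mu> s) (- cnj z))) has_vector_derivative
            gen_A \<gamma> \<tau> (- cnj (cauchy_H (\<mu> t) (- cnj z)))) (at t within {0..})"
      if t: "t \<ge> 0" for t
    proof -
      have pos: "Im (cauchy_H (\<mu> t) (- cnj z)) > 0"
        using H_Im_pos(1)[OF sg_basic(3,2,4)[OF sg t]] z by simp
      have "((\<lambda>s. - cnj (cauchy_H (\<mu> s) (- cnj z))) has_vector_derivative
            - cnj (gen_A \<gamma> \<tau> (cauchy_H (\<mu> t) (- cnj z)))) (at t within {0..})"
        by (intro has_vector_derivative_minus has_vector_derivative_cnj ap_basic(4)[OF ap z1 t])
      also have "- cnj (gen_A \<gamma> \<tau> (cauchy_H (\<mu> t) (- cnj z))) = gen_A \<gamma> \<tau> (- cnj (cauchy_H (\<mu> t) (- cnj z)))"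
        using As[OF pos] by simp
      finally show ?thesis .
    qed
    show "cauchy_H (\<mu> 0) z = - cnj (cauchy_H (\<mu> 0) (- cnj z))"
      using ap_basic(3)[OF ap z0] ap_basic(3)[OF ap z1] by simp
    show "Im (cauchy_H (\<mu> t) z) > 0" if t: "t \<ge> 0" for t
      using H_Im_pos(1)[OF sg_basic(3,2,4)[OF sg t]] z by simp
    show "Im (- cnj (cauchy_H (\<mu> t) (- cnj z))) > 0" if t: "t \<ge> 0" for t
      using H_Im_pos(1)[OF sg_basic(3,2,4)[OF sg t]] z by simp
    show "\<exists>L. \<forall>w1 w2. Im w1 \<ge> c \<longrightarrow> Im w2 \<ge> c \<longrightarrow> cmod w1 \<le> R \<longrightarrow> cmod w2 \<le> R
                \<longrightarrow> cmod (gen_A \<gamma> \<tau> w1 - gen_A \<gamma> \<tau> w2) \<le> L * cmod (w1 - w2)" if "c > 0" for c R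
      by (rule gen_A_lip[OF ap_basic(1,2)[OF ap] that])
  qed (rule T)
  have Geq: "cauchy_G (\<mu> T) z = cauchy_G (refl_meas (\<mu> T)) z" if z: "Im z > 0" for z
  proof -
    have "cauchy_H (\<mu> T) z = cauchy_H (refl_meas (\<mu> T)) z"
      using Heq[OF z] H_refl[OF fT(2)] by simp
    then have "1 / cauchy_H (\<mu> T) z = 1 / cauchy_H (refl_meas (\<mu> T)) z" by simp
    then show ?thesis unfolding cauchy_H_def by simp
  qed
  have "\<mu> T = refl_meas (\<mu> T)"
    by (rule cauchy_unique[OF fT(3,2) refl_finite[OF fT(3,2)] refl_sets Geq])
  then show ?thesis using symmetric_iff_refl[OF fT(2)] by simp
qed


lemma support_bounded_AE:
  assumes s: "sets M = sets borel" and c: "compact (measure_support M)"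
  shows "\<exists>R>0. AE x in M. \<bar>x\<bar> \<le> R"
proof -
  obtain R0 where R0: "\<And>x. x \<in> measure_support M \<Longrightarrow> norm x \<le> R0"
    using compact_imp_bounded[OF c] unfolding bounded_iff by blast
  define \<F> where "\<F> = {ball x e | x e. e > 0 \<and> emeasure M (ball x e) = 0}"
  obtain \<F>' where F': "\<F>' \<subseteq> \<F>" "countable \<F>'" "\<Union>\<F>' = \<Union>\<F>"
    using Lindelof[of \<F>] unfolding \<F>_def by auto
  have null: "\<Union>\<F>' \<in> null_sets M"
  proof -
    have "(\<Union>B\<in>\<F>'. B) \<in> null_sets M"
    proof (rule null_sets_UN'[OF F'(2)])
      fix B assume "B \<in> \<F>'"
      then obtain x e where B: "B = ball x e" "emeasure M (ball x e) = 0" using F'(1) unfolding \<F>_def by auto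
      have "B \<in> sets M" using s B by simp
      then show "B \<in> null_sets M" using B by (simp add: null_sets_def)
    qed
    then show ?thesis by simp
  qed
  have "AE x in M. x \<notin> \<Union>\<F>'" by (rule AE_not_in[OF null])
  then have "AE x in M. \<bar>x\<bar> \<le> \<bar>R0\<bar> + 1"
  proof eventually_elim
    case (elim x)
    have "x \<in> measure_support M"
    proof (rule ccontr)
      assume "x \<notin> measure_support M"
      then obtain e where e: "e > 0" "\<not> emeasure M (ball x e) > 0" unfolding measure_support_def by auto
      then have "ball x e \<in> \<F>" unfolding \<F>_def by (auto simp: zero_less_iff_neq_zero)
      then have "x \<in> \<Union>\<F>'" using F'(3) e(1) centre_in_ball[of x e] by blast
      then show False using elim by simp
    qed
    then show ?case using R0[of x] by simp
  qed
  then show ?thesis by (intro exI[of _ "\<bar>R0\<bar> + 1"]) auto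
qed


definition psi :: "real measure \<Rightarrow> complex \<Rightarrow> complex" where
  "psi M u = (\<integral>x. 1 / (complex_of_real 1 + complex_of_real (- x) * u) \<partial>M)"

lemma one_minus_lb:
  fixes x R :: real and u :: complex
  assumes "\<bar>x\<bar> \<le> R" "R > 0" "cmod u \<le> r / R" "r \<le> 1" "r \<ge> 0"
  shows "cmod (complex_of_real 1 + complex_of_real (- x) * u) \<ge> 1 - r"
proof -
  have "cmod (complex_of_real (- x) * u) \<le> R * (r / R)"
    unfolding norm_mult using assms by (intro mult_mono) auto
  also have "\<dots> = r" using assms by simp
  finally have a: "cmod (complex_of_real (- x) * u) \<le> r" .
  have "1 = cmod (complex_of_real 1 + complex_of_real (- x) * u - complex_of_real (- x) * u)" by simp
  also have "\<dots> \<le> cmod (complex_of_real 1 + complex_of_real (- x) * u) + cmod (complex_of_real (- x) * u)"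
    by (rule norm_triangle_ineq4)
  finally show ?thesis using a by simp
qed

lemma psi_holo:
  assumes p: "prob_space M" and s: "sets M = sets borel" and b: "AE x in M. \<bar>x\<bar> \<le> R" and R: "R > 0"
  shows "psi M holomorphic_on ball 0 (1 / (2 * R))"
proof -
  have fin: "finite_measure M" using p by (simp add: prob_space_def)
  have "psi M field_differentiable at u0" if u0: "u0 \<in> ball 0 (1 / (2 * R))" for u0
  proof -
    define d where "d = 1 / (2 * R) - cmod u0"
    have d: "d > 0" using u0 by (simp add: d_def)
    have "((\<lambda>u. \<integral>x. 1 / (complex_of_real 1 + complex_of_real (- x) * u) \<partial>M) has_field_derivative
          (\<integral>x. - complex_of_real (- x) / (complex_of_real 1 + complex_of_real (- x) * u0)^2 \<partial>M)) (at u0)"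
    proof (rule param_integral_deriv[OF fin s, where Q=R and d=d and c="1/2"])
      show "AE x in M. \<bar>- x\<bar> \<le> R" using b by simp
      fix u assume u: "u \<in> ball u0 d"
      have "cmod u \<le> cmod u0 + cmod (u - u0)" using norm_triangle_ineq[of u0 "u - u0"] by simp
      also have "\<dots> \<le> 1 / (2 * R)" using u by (simp add: d_def dist_norm norm_minus_commute)
      finally have uu: "cmod u \<le> (1/2) / R" by simp
      show "AE x in M. 1 / 2 \<le> cmod (complex_of_real 1 + complex_of_real (- x) * u)"
        using b by eventually_elim (use one_minus_lb[OF _ R uu] in auto)
    qed (use d in auto)
    then show ?thesis unfolding psi_def[abs_def] field_differentiable_def by blast
  qed
  then show ?thesis by (simp add: holomorphic_on_def field_differentiable_at_within)
qed

lemma psi_0: assumes "prob_space M" shows "psi M 0 = 1"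
  unfolding psi_def using assms by (simp add: prob_space.prob_space)

lemma psi_near_1:
  assumes p: "prob_space M" and s: "sets M = sets borel" and b: "AE x in M. \<bar>x\<bar> \<le> R" and R: "R > 0"
    and u: "cmod u \<le> 1 / (4 * R)"
  shows "cmod (psi M u - 1) \<le> 1 / 2" "psi M u \<noteq> 0"
proof -
  interpret prob_space M by fact
  have uu: "cmod u \<le> (1/2) / R" using u R by (simp add: field_simps)
  define k where "k x = 1 / (complex_of_real 1 + complex_of_real (- x) * u)" for x
  have km: "k \<in> borel_measurable M" unfolding k_def by (subst measurable_cong_sets[OF s refl]) simp
  have kb: "AE x in M. cmod (k x) \<le> 2"
    using b
  proof eventually_elim
    case (elim x)
    have a: "cmod (complex_of_real 1 + complex_of_real (- x) * u) \<ge> 1/2"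
      using one_minus_lb[OF elim R uu] by simp
    have "1 / cmod (complex_of_real 1 + complex_of_real (- x) * u) \<le> 1 / (1/2)"
      using a by (intro divide_left_mono) auto
    then show ?case unfolding k_def norm_divide by simp
  qed
  have ki: "integrable M k" by (rule integrable_const_bound[OF kb km])
  have "psi M u - 1 = (\<integral>x. k x - 1 \<partial>M)"
    unfolding psi_def k_def[symmetric] using ki prob_space by simp
  also have "cmod \<dots> \<le> (\<integral>x. cmod (k x - 1) \<partial>M)" by (rule integral_norm_bound)
  also have "\<dots> \<le> (\<integral>x. 1/2 \<partial>M)"
  proof (rule integral_mono_AE)
    show "integrable M (\<lambda>x. cmod (k x - 1))" using ki by auto
    show "integrable M (\<lambda>x. 1/2 :: real)" by simp
    show "AE x in M. cmod (k x - 1) \<le> 1/2"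
      using b
    proof eventually_elim
      case (elim x)
      define a where "a = complex_of_real 1 + complex_of_real (- x) * u"
      have a: "cmod a \<ge> 1/2" using one_minus_lb[OF elim R uu] by (simp add: a_def)
      then have a0: "a \<noteq> 0" by auto
      have "k x - 1 = (1 - a) / a" unfolding k_def a_def[symmetric] using a0 by (simp add: field_simps)
      also have "1 - a = complex_of_real x * u" by (simp add: a_def)
      finally have "cmod (k x - 1) = cmod (complex_of_real x * u) / cmod a" by (simp add: norm_divide)
      also have "\<dots> \<le> (1/4) / (1/2)"
      proof (rule frac_le)
        have "cmod (complex_of_real x * u) = \<bar>x\<bar> * cmod u" by (simp add: norm_mult)
        also have "\<dots> \<le> R * (1 / (4 * R))" using elim u R by (intro mult_mono) auto
        also have "\<dots> = 1/4" using R by simp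
        finally show "cmod (complex_of_real x * u) \<le> 1/4" .
      qed (use a in auto)
      also have "\<dots> = 1/2" by simp
      finally show ?case .
    qed
  qed
  also have "\<dots> = 1/2" using prob_space by simp
  finally show c: "cmod (psi M u - 1) \<le> 1 / 2" .
  show "psi M u \<noteq> 0"
  proof
    assume "psi M u = 0" then show False using c by simp
  qed
qed

lemma G_psi:
  assumes z: "z \<noteq> 0"
  shows "cauchy_G M z = psi M (1 / z) / z"
proof -
  have "cauchy_G M z = (\<integral>x. (1 / (complex_of_real 1 + complex_of_real (- x) * (1 / z))) / z \<partial>M)"
    unfolding cauchy_G_def
  proof (intro Bochner_Integration.integral_cong refl)
    fix x
    show "1 / (z - complex_of_real x) = 1 / (complex_of_real 1 + complex_of_real (- x) * (1 / z)) / z"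
    proof (cases "z = complex_of_real x")
      case True
      then have "complex_of_real 1 + complex_of_real (- x) * (1 / z) = 0" using z by (simp add: field_simps)
      then show ?thesis using True by simp
    next
      case False
      then have "z - complex_of_real x \<noteq> 0" by simp
      then show ?thesis using z by (simp add: field_simps)
    qed
  qed
  also have "\<dots> = psi M (1 / z) / z" unfolding psi_def by (rule integral_divide_zero)
  finally show ?thesis .
qed

lemma H_psi:
  assumes z: "z \<noteq> 0"
  shows "cauchy_H M z = z / psi M (1 / z)"
  unfolding cauchy_H_def G_psi[OF z] by simp


lemma dist_lb:
  fixes w :: complex and x R :: real
  assumes "\<bar>x\<bar> \<le> R"
  shows "cmod (w - complex_of_real x) \<ge> cmod w - R"
proof -
  have "cmod w \<le> cmod (w - complex_of_real x) + cmod (complex_of_real x)"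
    using norm_triangle_ineq[of "w - complex_of_real x" "complex_of_real x"] by simp
  then show ?thesis using assms by simp
qed

lemma a_bound:
  fixes w :: complex and x R \<rho> :: real
  assumes "\<bar>x\<bar> \<le> R" "R \<ge> 0" "cmod w \<ge> \<rho>" "\<rho> > R"
  shows "cmod (complex_of_real x / (w - complex_of_real x)) \<le> R / (\<rho> - R)"
proof -
  have d: "cmod (w - complex_of_real x) \<ge> \<rho> - R" using dist_lb[OF assms(1), of w] assms by simp
  have "cmod (complex_of_real x / (w - complex_of_real x)) = \<bar>x\<bar> / cmod (w - complex_of_real x)"
    by (simp add: norm_divide)
  also have "\<dots> \<le> R / (\<rho> - R)" using assms d by (intro frac_le) auto
  finally show ?thesis .
qed

lemma zG_bound:
  assumes p: "prob_space M" and s: "sets M = sets borel" and b: "AE x in M. \<bar>x\<bar> \<le> R" and R: "R \<ge> 0"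
    and w: "Im w > 0" and \<rho>: "cmod w \<ge> \<rho>" "\<rho> > R"
  shows "cmod (w * cauchy_G M w - 1) \<le> R / (\<rho> - R)"
proof -
  interpret prob_space M by fact
  have w0: "Im w \<noteq> 0" using w by simp
  have fin: "finite_measure M" by (simp add: finite_measure_axioms)
  have ki: "integrable M (\<lambda>x. 1 / (w - complex_of_real x))" by (rule kernel_integrable[OF fin s w0])
  have nz: "w - complex_of_real x \<noteq> 0" for x using w by (auto simp: complex_eq_iff)
  have kiw: "integrable M (\<lambda>x. w * (1 / (w - complex_of_real x)))" by (rule integrable_mult_right) (rule ki)
  have "(\<integral>x. w * (1 / (w - complex_of_real x)) - 1 \<partial>M)
      = (\<integral>x. w * (1 / (w - complex_of_real x)) \<partial>M) - (\<integral>x. 1 \<partial>M)"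
  proof (rule Bochner_Integration.integral_diff)
    show "integrable M (\<lambda>x. w * (1 / (w - complex_of_real x)))" by (rule kiw)
  qed simp
  also have "\<dots> = w * cauchy_G M w - 1"
    unfolding cauchy_G_def by (simp only: integral_mult_right_zero) (simp add: prob_space)
  finally have "w * cauchy_G M w - 1 = (\<integral>x. w * (1 / (w - complex_of_real x)) - 1 \<partial>M)" by simp
  also have "\<dots> = (\<integral>x. complex_of_real x / (w - complex_of_real x) \<partial>M)"
    using nz by (intro Bochner_Integration.integral_cong refl) (simp add: field_simps)
  also have "cmod \<dots> \<le> (\<integral>x. cmod (complex_of_real x / (w - complex_of_real x)) \<partial>M)"
    by (rule integral_norm_bound)
  also have "\<dots> \<le> (\<integral>x. R / (\<rho> - R) \<partial>M)"
  proof (rule integral_mono_AE)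
    have "integrable M (\<lambda>x. w * (1 / (w - complex_of_real x)) - 1)"
      by (intro Bochner_Integration.integrable_diff kiw) simp
    moreover have e: "w * (1 / (w - complex_of_real x)) - 1 = complex_of_real x / (w - complex_of_real x)" for x
      using nz[of x] by (simp add: field_simps)
    ultimately have "integrable M (\<lambda>x. complex_of_real x / (w - complex_of_real x))"
      by (simp only: e)
    then show "integrable M (\<lambda>x. cmod (complex_of_real x / (w - complex_of_real x)))" by auto
    show "integrable M (\<lambda>x. R / (\<rho> - R))" by simp
    show "AE x in M. cmod (complex_of_real x / (w - complex_of_real x)) \<le> R / (\<rho> - R)"
      using b by eventually_elim (rule a_bound[OF _ R \<rho>])
  qed
  also have "\<dots> = R / (\<rho> - R)" using prob_space by simp
  finally show ?thesis .
qed

definition Iint :: "real measure \<Rightarrow> complex \<Rightarrow> complex \<Rightarrow> complex" where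
  "Iint M w1 w2 = (\<integral>x. 1 / ((w1 - complex_of_real x) * (w2 - complex_of_real x)) \<partial>M)"

lemma G_diff_Iint:
  assumes fin: "finite_measure M" and s: "sets M = sets borel" and w1: "Im w1 > 0" and w2: "Im w2 > 0"
  shows "cauchy_G M w2 - cauchy_G M w1 = (w1 - w2) * Iint M w1 w2"
proof -
  have i1: "integrable M (\<lambda>x. 1 / (w1 - complex_of_real x))" using kernel_integrable[OF fin s] w1 by simp
  have i2: "integrable M (\<lambda>x. 1 / (w2 - complex_of_real x))" using kernel_integrable[OF fin s] w2 by simp
  have nz1: "w1 - complex_of_real x \<noteq> 0" and nz2: "w2 - complex_of_real x \<noteq> 0" for x
    using w1 w2 by (auto simp: complex_eq_iff)
  have "cauchy_G M w2 - cauchy_G M w1 = (\<integral>x. 1 / (w2 - complex_of_real x) - 1 / (w1 - complex_of_real x) \<partial>M)"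
    unfolding cauchy_G_def using i1 i2 by simp
  also have "\<dots> = (\<integral>x. (w1 - w2) * (1 / ((w1 - complex_of_real x) * (w2 - complex_of_real x))) \<partial>M)"
    using nz1 nz2 by (intro Bochner_Integration.integral_cong refl) (simp add: field_simps)
  also have "\<dots> = (w1 - w2) * Iint M w1 w2" unfolding Iint_def by (rule integral_mult_right_zero)
  finally show ?thesis .
qed

lemma wwI_bound:
  assumes p: "prob_space M" and s: "sets M = sets borel" and b: "AE x in M. \<bar>x\<bar> \<le> R" and R: "R \<ge> 0"
    and w1: "Im w1 > 0" and w2: "Im w2 > 0" and \<rho>1: "cmod w1 \<ge> \<rho>" and \<rho>2: "cmod w2 \<ge> \<rho>"
    and \<rho>: "\<rho> > R" and \<epsilon>1: "R / (\<rho> - R) \<le> 1"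
  shows "cmod (w1 * w2 * Iint M w1 w2 - 1) \<le> 3 * (R / (\<rho> - R))"
proof -
  interpret prob_space M by fact
  have fin: "finite_measure M" by (simp add: finite_measure_axioms)
  define \<epsilon> where "\<epsilon> = R / (\<rho> - R)"
  have \<epsilon>0: "\<epsilon> \<ge> 0" using R \<rho> by (simp add: \<epsilon>_def)
  have nz1: "w1 - complex_of_real x \<noteq> 0" and nz2: "w2 - complex_of_real x \<noteq> 0" for x
    using w1 w2 by (auto simp: complex_eq_iff)
  define k where "k x = w1 * w2 * (1 / ((w1 - complex_of_real x) * (w2 - complex_of_real x))) - 1" for x
  have keq: "k x = complex_of_real x / (w1 - complex_of_real x) + complex_of_real x / (w2 - complex_of_real x)
      + (complex_of_real x / (w1 - complex_of_real x)) * (complex_of_real x / (w2 - complex_of_real x))" for x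
  proof -
    have gen: "(d1 + y) * (d2 + y) * (1 / (d1 * d2)) - 1 = y / d1 + y / d2 + y / d1 * (y / d2)"
      if "d1 \<noteq> 0" "d2 \<noteq> 0" for d1 d2 y :: complex
      using that by (simp add: field_simps)
    show ?thesis unfolding k_def using gen[OF nz1[of x] nz2[of x], of "complex_of_real x"] by simp
  qed
  have km: "k \<in> borel_measurable M" unfolding k_def by (subst measurable_cong_sets[OF s refl]) simp
  have kb: "AE x in M. cmod (k x) \<le> 3 * \<epsilon>"
    using b
  proof eventually_elim
    case (elim x)
    have a1: "cmod (complex_of_real x / (w1 - complex_of_real x)) \<le> \<epsilon>"
      unfolding \<epsilon>_def by (rule a_bound[OF elim R \<rho>1 \<rho>])
    have a2: "cmod (complex_of_real x / (w2 - complex_of_real x)) \<le> \<epsilon>"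
      unfolding \<epsilon>_def by (rule a_bound[OF elim R \<rho>2 \<rho>])
    define a1 where "a1 = complex_of_real x / (w1 - complex_of_real x)"
    define a2 where "a2 = complex_of_real x / (w2 - complex_of_real x)"
    have p: "cmod (a1 * a2) \<le> \<epsilon> * \<epsilon>" unfolding norm_mult a1_def a2_def
      by (rule mult_mono[OF a1 a2]) (use \<epsilon>0 in auto)
    have "cmod (k x) \<le> \<epsilon> + \<epsilon> + \<epsilon> * \<epsilon>"
      unfolding keq a1_def[symmetric] a2_def[symmetric]
      using norm_triangle_ineq[of "a1 + a2" "a1 * a2"] norm_triangle_ineq[of a1 a2] p a1 a2
      unfolding a1_def[symmetric] a2_def[symmetric] by linarith
    also have "\<dots> \<le> 3 * \<epsilon>" using \<epsilon>1 \<epsilon>0 unfolding \<epsilon>_def[symmetric]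
      by (simp add: mult_le_cancel_left1 mult_right_le_one_le)
    finally show ?case .
  qed
  have ki: "integrable M k" by (rule integrable_const_bound[OF kb km])
  have "w1 * w2 * Iint M w1 w2 = (\<integral>x. w1 * w2 * (1 / ((w1 - complex_of_real x) * (w2 - complex_of_real x))) \<partial>M)"
    unfolding Iint_def by (rule integral_mult_right_zero[symmetric])
  also have "\<dots> = (\<integral>x. k x + 1 \<partial>M)" by (simp add: k_def)
  finally have "w1 * w2 * Iint M w1 w2 - 1 = (\<integral>x. k x + 1 \<partial>M) - 1" by simp
  also have "\<dots> = (\<integral>x. k x \<partial>M)" using ki prob_space by simp
  also have "cmod \<dots> \<le> 3 * \<epsilon>"
    using integral_norm_bound[of M k] integral_mono_AE[of M "\<lambda>x. cmod (k x)" "\<lambda>_. 3 * \<epsilon>"] kb ki prob_space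
    by (simp del: integral_norm_bound)
  finally show ?thesis by (simp add: \<epsilon>_def)
qed

lemma quot_alg:
  fixes A B1 B2 :: complex
  assumes "cmod (A - 1) \<le> 3 * \<epsilon>" "cmod (B1 - 1) \<le> \<epsilon>" "cmod (B2 - 1) \<le> \<epsilon>" "\<epsilon> \<ge> 0" "\<epsilon> \<le> 1/2"
  shows "cmod (A / (B1 * B2) - 1) \<le> 24 * \<epsilon>"
proof -
  have lb: "cmod B \<ge> 1/2" if "cmod (B - 1) \<le> \<epsilon>" for B :: complex
  proof -
    have "1 \<le> cmod B + cmod (B - 1)" using norm_triangle_ineq4[of B "B - 1"] by simp
    then show ?thesis using that assms by simp
  qed
  have ub: "cmod B2 \<le> 1 + \<epsilon>"
    using norm_triangle_ineq[of "B2 - 1" 1] assms by simp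
  have b1: "cmod B1 \<ge> 1/2" and b2: "cmod B2 \<ge> 1/2" using lb assms by auto
  have nz: "B1 * B2 \<noteq> 0" using b1 b2 by auto
  have prod: "cmod (B1 * B2) \<ge> 1/4"
  proof -
    have "(1/2) * (1/2) \<le> cmod B1 * cmod B2" using b1 b2 by (intro mult_mono) auto
    then show ?thesis by (simp add: norm_mult)
  qed
  have "cmod (B1 * B2 - 1) = cmod ((B1 - 1) * B2 + (B2 - 1))" by (simp add: algebra_simps)
  also have "\<dots> \<le> cmod ((B1 - 1) * B2) + cmod (B2 - 1)" by (rule norm_triangle_ineq)
  also have "\<dots> \<le> \<epsilon> * (1 + \<epsilon>) + \<epsilon>"
    unfolding norm_mult using assms ub by (intro add_mono mult_mono) auto
  also have "\<dots> \<le> 3 * \<epsilon>"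
  proof -
    have "\<epsilon> * \<epsilon> \<le> \<epsilon> * 1" by (rule mult_left_mono) (use assms in auto)
    then show ?thesis by (simp add: algebra_simps)
  qed
  finally have bb: "cmod (B1 * B2 - 1) \<le> 3 * \<epsilon>" .
  have "A / (B1 * B2) - 1 = ((A - 1) - (B1 * B2 - 1)) / (B1 * B2)" using nz by (simp add: field_simps)
  also have "cmod \<dots> \<le> (3 * \<epsilon> + 3 * \<epsilon>) / (1/4)"
    unfolding norm_divide
  proof (rule frac_le)
    show "cmod (A - 1 - (B1 * B2 - 1)) \<le> 3 * \<epsilon> + 3 * \<epsilon>"
      using norm_triangle_ineq4[of "A - 1" "B1 * B2 - 1"] assms(1) bb by linarith
  qed (use assms prod in auto)
  also have "\<dots> = 24 * \<epsilon>" by simp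
  finally show ?thesis .
qed

lemma H_quot_bound:
  assumes p: "prob_space M" and s: "sets M = sets borel" and b: "AE x in M. \<bar>x\<bar> \<le> R" and R: "R > 0"
    and w1: "Im w1 > 0" and w2: "Im w2 > 0" and ne: "w1 \<noteq> w2"
    and \<rho>1: "cmod w1 \<ge> \<rho>" and \<rho>2: "cmod w2 \<ge> \<rho>" and \<rho>: "\<rho> \<ge> 3 * R"
  shows "cmod ((cauchy_H M w1 - cauchy_H M w2) / (w1 - w2) - 1) \<le> 24 * (R / (\<rho> - R))"
proof -
  have fin: "finite_measure M" using p by (simp add: prob_space_def)
  have e1: "emeasure M (space M) \<noteq> 0" using p by (simp add: prob_space.emeasure_space_1)
  have g1: "cauchy_G M w1 \<noteq> 0" by (rule H_Im_pos(2)[OF fin s e1 w1])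
  have g2: "cauchy_G M w2 \<noteq> 0" by (rule H_Im_pos(2)[OF fin s e1 w2])
  have \<rho>R: "\<rho> > R" using \<rho> R by simp
  define \<epsilon> where "\<epsilon> = R / (\<rho> - R)"
  have \<epsilon>0: "\<epsilon> \<ge> 0" using \<rho>R R by (simp add: \<epsilon>_def)
  have \<epsilon>h: "\<epsilon> \<le> 1/2" using \<rho> R by (simp add: \<epsilon>_def field_simps)
  have w10: "w1 \<noteq> 0" and w20: "w2 \<noteq> 0" using w1 w2 by auto
  have "(cauchy_H M w1 - cauchy_H M w2) / (w1 - w2)
      = (w1 * w2 * Iint M w1 w2) / ((w1 * cauchy_G M w1) * (w2 * cauchy_G M w2))"
  proof -
    have "cauchy_H M w1 - cauchy_H M w2 = (cauchy_G M w2 - cauchy_G M w1) / (cauchy_G M w1 * cauchy_G M w2)"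
      unfolding cauchy_H_def using g1 g2 by (simp add: field_simps)
    also have "\<dots> = (w1 - w2) * Iint M w1 w2 / (cauchy_G M w1 * cauchy_G M w2)"
      using G_diff_Iint[OF fin s w1 w2] by simp
    finally show ?thesis using ne w10 w20 g1 g2 by (simp add: field_simps)
  qed
  also have "cmod (\<dots> - 1) \<le> 24 * \<epsilon>"
  proof (rule quot_alg[OF _ _ _ \<epsilon>0 \<epsilon>h])
    show "cmod (w1 * w2 * Iint M w1 w2 - 1) \<le> 3 * \<epsilon>"
    proof -
      have "R / (\<rho> - R) \<le> 1" using \<epsilon>h \<epsilon>_def by linarith
      then show ?thesis unfolding \<epsilon>_def by (intro wwI_bound[OF p s b] w1 w2 \<rho>1 \<rho>2 \<rho>R less_imp_le[OF R])
    qed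
    show "cmod (w1 * cauchy_G M w1 - 1) \<le> \<epsilon>" unfolding \<epsilon>_def by (rule zG_bound[OF p s b less_imp_le[OF R] w1 \<rho>1 \<rho>R])
    show "cmod (w2 * cauchy_G M w2 - 1) \<le> \<epsilon>" unfolding \<epsilon>_def by (rule zG_bound[OF p s b less_imp_le[OF R] w2 \<rho>2 \<rho>R])
  qed
  finally show ?thesis by (simp add: \<epsilon>_def)
qed


lemma eps_to_0:
  fixes c :: "nat \<Rightarrow> real"
  assumes "filterlim c at_top sequentially"
  shows "(\<lambda>k. R / (c k - R)) \<longlonglongrightarrow> 0"
proof -
  have "filterlim (\<lambda>k. - R + c k) at_top sequentially"
    by (rule filterlim_tendsto_add_at_top[OF tendsto_const assms])
  then have "(\<lambda>k. inverse (- R + c k)) \<longlonglongrightarrow> 0" by (rule tendsto_inverse_0_at_top)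
  then have "(\<lambda>k. R * inverse (- R + c k)) \<longlonglongrightarrow> R * 0" by (intro tendsto_intros)
  then show ?thesis by (simp add: divide_inverse)
qed

lemma H_asymp:
  assumes p: "prob_space M" and s: "sets M = sets borel" and b: "AE x in M. \<bar>x\<bar> \<le> R" and R: "R > 0"
    and zi: "\<And>k. Im (z k) > 0" and zl: "filterlim (\<lambda>k. cmod (z k)) at_top sequentially"
  shows "(\<lambda>k. cauchy_H M (z k) / z k) \<longlonglongrightarrow> 1"
    and "filterlim (\<lambda>k. cmod (cauchy_H M (z k))) at_top sequentially"
proof -
  have ev: "\<forall>\<^sub>F k in sequentially. cmod (z k) \<ge> 2 * R"
    using zl by (simp add: filterlim_at_top)
  have "\<forall>\<^sub>F k in sequentially. norm (z k * cauchy_G M (z k) - 1) \<le> R / (cmod (z k) - R)"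
    using ev
  proof eventually_elim
    case (elim k)
    show ?case by (rule zG_bound[OF p s b less_imp_le[OF R] zi order_refl]) (use elim R in auto)
  qed
  from Lim_null_comparison[OF this eps_to_0[OF zl]]
  have "(\<lambda>k. z k * cauchy_G M (z k) - 1) \<longlonglongrightarrow> 0" .
  then have zg: "(\<lambda>k. z k * cauchy_G M (z k)) \<longlonglongrightarrow> 1" by (rule LIM_zero_cancel)
  have eq: "cauchy_H M (z k) / z k = inverse (z k * cauchy_G M (z k))" for k
    unfolding cauchy_H_def by (simp add: divide_inverse mult.commute)
  have "(\<lambda>k. inverse (z k * cauchy_G M (z k))) \<longlonglongrightarrow> inverse 1"
    by (intro tendsto_inverse zg) simp
  then show lim: "(\<lambda>k. cauchy_H M (z k) / z k) \<longlonglongrightarrow> 1" unfolding eq by simp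
  have z0: "z k \<noteq> 0" for k using zi[of k] by auto
  have "filterlim (\<lambda>k. cmod (cauchy_H M (z k) / z k) * cmod (z k)) at_top sequentially"
    by (rule filterlim_tendsto_pos_mult_at_top[OF tendsto_norm[OF lim] _ zl]) simp
  then show "filterlim (\<lambda>k. cmod (cauchy_H M (z k))) at_top sequentially"
    using z0 by (simp add: norm_divide)
qed

lemma inv_to_0:
  fixes w :: "nat \<Rightarrow> complex"
  assumes "filterlim (\<lambda>k. cmod (w k)) at_top sequentially"
  shows "(\<lambda>k. 1 / w k) \<longlonglongrightarrow> 0"
proof -
  have "(\<lambda>k. inverse (cmod (w k))) \<longlonglongrightarrow> 0" by (rule tendsto_inverse_0_at_top[OF assms])
  then have "(\<lambda>k. norm (1 / w k)) \<longlonglongrightarrow> 0" by (simp add: norm_divide divide_inverse norm_inverse)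
  then show ?thesis by (rule tendsto_norm_zero_cancel)
qed


lemma halving_core:
  assumes pM: "prob_space M" and sM: "sets M = sets borel" and bM: "AE x in M. \<bar>x\<bar> \<le> R"
    and pN: "prob_space N" and sN: "sets N = sets borel" and bN: "AE x in N. \<bar>x\<bar> \<le> R"
    and R: "R > 0"
    and ff: "\<And>z. Im z > 0 \<Longrightarrow> cauchy_H M (cauchy_H M z) = cauchy_H N (cauchy_H N z)"
    and r: "r > 0" and Ec: "isCont E 0" and Enz: "\<And>w. cmod w \<le> r \<Longrightarrow> E w \<noteq> 0"
    and rep: "\<And>w. Im w > 0 \<Longrightarrow> cmod w \<ge> 1 / r \<Longrightarrow> cauchy_H M w - cauchy_H N w = w * E (1 / w) * (1 / w)^n"
  shows False
proof -
  define f where "f = cauchy_H M"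
  define g where "g = cauchy_H N"
  define d where "d w = f w - g w" for w
  define z where "z k = \<i> * complex_of_real (real k + 1)" for k :: nat
  have fM: "finite_measure M" using pM by (simp add: prob_space_def)
  have fN: "finite_measure N" using pN by (simp add: prob_space_def)
  have eM: "emeasure M (space M) \<noteq> 0" using pM by (simp add: prob_space.emeasure_space_1)
  have eN: "emeasure N (space N) \<noteq> 0" using pN by (simp add: prob_space.emeasure_space_1)
  have fpos: "Im (f w) > 0" if "Im w > 0" for w unfolding f_def by (rule H_Im_pos(1)[OF fM sM eM that])
  have gpos: "Im (g w) > 0" if "Im w > 0" for w unfolding g_def by (rule H_Im_pos(1)[OF fN sN eN that])
  have zi: "Im (z k) > 0" for k by (simp add: z_def)
  have zn: "cmod (z k) = real k + 1" for k unfolding z_def norm_mult norm_of_real by simp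
  have zl: "filterlim (\<lambda>k. cmod (z k)) at_top sequentially"
    unfolding zn using filterlim_tendsto_add_at_top[OF tendsto_const[of 1] filterlim_real_sequentially] by (simp add: add.commute)
  have z0: "z k \<noteq> 0" for k using zi[of k] by auto
  note fas = H_asymp[OF pM sM bM R zi zl, folded f_def]
  note gas = H_asymp[OF pN sN bN R zi zl, folded g_def]
  have gzi: "Im (g (z k)) > 0" for k by (rule gpos[OF zi])
  have fzi: "Im (f (z k)) > 0" for k by (rule fpos[OF zi])
  have gz0: "g (z k) \<noteq> 0" for k using gzi[of k] by auto
  define C where "C = max (1 / r) (3 * R)"
  have evz: "\<forall>\<^sub>F k in sequentially. cmod (z k) \<ge> C" using zl by (simp add: filterlim_at_top)
  have evf: "\<forall>\<^sub>F k in sequentially. cmod (f (z k)) \<ge> C" using fas(2) by (simp add: filterlim_at_top)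
  have evg: "\<forall>\<^sub>F k in sequentially. cmod (g (z k)) \<ge> C" using gas(2) by (simp add: filterlim_at_top)
  have drep: "d w = w * E (1 / w) * (1 / w)^n" if "Im w > 0" "cmod w \<ge> C" for w
    unfolding d_def f_def g_def by (rule rep[OF that(1)]) (use that(2) in \<open>simp add: C_def\<close>)
  have dnz: "d w \<noteq> 0" if "Im w > 0" "cmod w \<ge> C" for w
  proof -
    have w0: "w \<noteq> 0" using that by auto
    have "cmod (1 / w) \<le> r"
    proof -
      have "1 / r \<le> cmod w" using that(2) by (simp add: C_def)
      then have "1 / cmod w \<le> 1 / (1 / r)" using r w0 by (intro divide_left_mono) auto
      then show ?thesis using r by (simp add: norm_divide)
    qed
    then show ?thesis unfolding drep[OF that] using w0 Enz by simp
  qed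
  define Q where "Q k = (f (f (z k)) - f (g (z k))) / (f (z k) - g (z k))" for k
  define \<rho> where "\<rho> k = min (cmod (f (z k))) (cmod (g (z k)))" for k
  have \<rho>l: "filterlim \<rho> at_top sequentially"
    unfolding filterlim_at_top
  proof
    fix Z :: real
    show "\<forall>\<^sub>F k in sequentially. Z \<le> \<rho> k"
      using fas(2)[unfolded filterlim_at_top, rule_format, of Z] gas(2)[unfolded filterlim_at_top, rule_format, of Z]
      by eventually_elim (simp add: \<rho>_def)
  qed
  have Qlim: "Q \<longlonglongrightarrow> 1"
  proof -
    have "\<forall>\<^sub>F k in sequentially. norm (Q k - 1) \<le> 24 * (R / (\<rho> k - R))"
      using evz evf evg
    proof eventually_elim
      case (elim k)
      have ne: "f (z k) \<noteq> g (z k)" using dnz[OF zi elim(1)] by (simp add: d_def)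
      show ?case unfolding Q_def f_def
      proof (rule H_quot_bound[OF pM sM bM R])
        show "Im (cauchy_H M (z k)) > 0" using fzi[of k] by (simp add: f_def)
        show "Im (g (z k)) > 0" by (rule gzi)
        show "cauchy_H M (z k) \<noteq> g (z k)" using ne by (simp add: f_def)
        show "\<rho> k \<le> cmod (cauchy_H M (z k))" by (simp add: \<rho>_def f_def)
        show "\<rho> k \<le> cmod (g (z k))" by (simp add: \<rho>_def)
        show "3 * R \<le> \<rho> k" using elim(2,3) by (simp add: \<rho>_def C_def)
      qed
    qed
    moreover have "(\<lambda>k. 24 * (R / (\<rho> k - R))) \<longlonglongrightarrow> 24 * 0"
      by (intro tendsto_intros eps_to_0 \<rho>l)
    ultimately have "(\<lambda>k. Q k - 1) \<longlonglongrightarrow> 0" using Lim_null_comparison by force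
    then show ?thesis by (rule LIM_zero_cancel)
  qed
  have QE: "\<forall>\<^sub>F k in sequentially. Q k = - (d (g (z k)) / d (z k))"
    using evz
  proof eventually_elim
    case (elim k)
    have "d (z k) \<noteq> 0" by (rule dnz[OF zi elim])
    moreover have "f (f (z k)) = g (g (z k))" unfolding f_def g_def by (rule ff[OF zi])
    ultimately show ?case unfolding Q_def d_def by (simp add: field_simps)
  qed
  have gz_z: "(\<lambda>k. g (z k) / z k) \<longlonglongrightarrow> 1" by (rule gas(1))
  have z_gz: "(\<lambda>k. z k / g (z k)) \<longlonglongrightarrow> 1"
  proof -
    have "(\<lambda>k. inverse (g (z k) / z k)) \<longlonglongrightarrow> inverse 1" by (intro tendsto_inverse gz_z) simp
    then show ?thesis by (simp add: divide_inverse mult.commute)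
  qed
  have E1: "(\<lambda>k. E (1 / g (z k))) \<longlonglongrightarrow> E 0"
    by (rule isCont_tendsto_compose[OF Ec inv_to_0[OF gas(2)]])
  have E2: "(\<lambda>k. E (1 / z k)) \<longlonglongrightarrow> E 0"
    by (rule isCont_tendsto_compose[OF Ec inv_to_0[OF zl]])
  have E0: "E 0 \<noteq> 0" using Enz r by simp
  have "(\<lambda>k. (g (z k) / z k) * (E (1 / g (z k)) / E (1 / z k)) * (z k / g (z k))^n) \<longlonglongrightarrow> 1 * (E 0 / E 0) * 1^n"
    by (intro tendsto_intros gz_z E1 E2 z_gz E0)
  then have Rl: "(\<lambda>k. (g (z k) / z k) * (E (1 / g (z k)) / E (1 / z k)) * (z k / g (z k))^n) \<longlonglongrightarrow> 1"
    using E0 by simp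
  have RE: "\<forall>\<^sub>F k in sequentially. (g (z k) / z k) * (E (1 / g (z k)) / E (1 / z k)) * (z k / g (z k))^n
        = d (g (z k)) / d (z k)"
    using evz evg
  proof eventually_elim
    case (elim k)
    have e1: "E (1 / z k) \<noteq> 0"
    proof -
      have "d (z k) \<noteq> 0" by (rule dnz[OF zi elim(1)])
      then show ?thesis unfolding drep[OF zi elim(1)] by auto
    qed
    show ?case unfolding drep[OF zi elim(1)] drep[OF gzi elim(2)]
      using z0[of k] gz0[of k] e1 by (simp add: field_simps power_divide)
  qed
  have "(\<lambda>k. d (g (z k)) / d (z k)) \<longlonglongrightarrow> 1" by (rule Lim_transform_eventually[OF Rl RE])
  then have "(\<lambda>k. - (d (g (z k)) / d (z k))) \<longlonglongrightarrow> - 1" by (intro tendsto_intros)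
  moreover have "(\<lambda>k. - (d (g (z k)) / d (z k))) \<longlonglongrightarrow> 1" by (rule Lim_transform_eventually[OF Qlim QE])
  ultimately have "(- 1 :: complex) = 1" by (rule LIMSEQ_unique)
  then show False by simp
qed


lemma halving:
  assumes sg: "monotone_conv_semigroup \<mu>" and s: "s \<ge> 0"
    and cs: "compact (measure_support (\<mu> s))" and sym2: "symmetric_measure (\<mu> (s + s))"
  shows "symmetric_measure (\<mu> s)"
proof -
  define M where "M = \<mu> s"
  define N where "N = refl_meas M"
  note bs = sg_basic[OF sg s, folded M_def]
  have pM: "prob_space M" and sM: "sets M = sets borel" and fM: "finite_measure M" using bs by auto
  have pN: "prob_space N" unfolding N_def by (rule refl_prob[OF pM sM])
  have sN: "sets N = sets borel" unfolding N_def by (rule refl_sets)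
  have fN: "finite_measure N" unfolding N_def by (rule refl_finite[OF fM sM])
  obtain R where R: "R > 0" and bM: "AE x in M. \<bar>x\<bar> \<le> R"
    using support_bounded_AE[OF sM cs[folded M_def]] by blast
  have bN: "AE x in N. \<bar>x\<bar> \<le> R"
    unfolding N_def refl_meas_def using bM
    by (subst AE_distr_iff) (auto simp: measurable_cong_sets[OF sM refl])
  have s2: "s + s \<ge> 0" using s by simp
  have H2: "cauchy_H (\<mu> (s + s)) z = cauchy_H M (cauchy_H M z)" if "Im z > 0" for z
    using sg s that unfolding monotone_conv_semigroup_def is_monotone_conv_def M_def by blast
  have HN: "cauchy_H N w = - cnj (cauchy_H M (- cnj w))" for w
    unfolding N_def by (rule H_refl[OF sM])
  have eM: "emeasure M (space M) \<noteq> 0" using bs by auto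
  have ff: "cauchy_H M (cauchy_H M z) = cauchy_H N (cauchy_H N z)" if z: "Im z > 0" for z
  proof -
    have z': "Im (- cnj z) > 0" using z by simp
    have "cauchy_H N (cauchy_H N z) = - cnj (cauchy_H M (cauchy_H M (- cnj z)))"
      unfolding HN by simp
    also have "\<dots> = - cnj (cauchy_H (\<mu> (s + s)) (- cnj z))" using H2[OF z'] by simp
    also have "\<dots> = cauchy_H (\<mu> (s + s)) z" using sym_H[OF sg s2 sym2, of z] by simp
    also have "\<dots> = cauchy_H M (cauchy_H M z)" by (rule H2[OF z])
    finally show ?thesis by simp
  qed
  define B where "B = ball (0::complex) (1 / (4 * R))"
  have BR: "cmod u \<le> 1 / (4 * R)" if "u \<in> B" for u using that by (simp add: B_def)
  have B2: "B \<subseteq> ball 0 (1 / (2 * R))" using R by (auto simp: B_def field_simps)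
  define D where "D u = 1 / psi M u - 1 / psi N u" for u
  have Dh: "D holomorphic_on B"
    unfolding D_def[abs_def]
  proof (intro holomorphic_intros)
    show "psi M holomorphic_on B" using holomorphic_on_subset[OF psi_holo[OF pM sM bM R] B2] .
    show "psi N holomorphic_on B" using holomorphic_on_subset[OF psi_holo[OF pN sN bN R] B2] .
    show "psi M u \<noteq> 0" if "u \<in> B" for u using psi_near_1(2)[OF pM sM bM R BR[OF that]] .
    show "psi N u \<noteq> 0" if "u \<in> B" for u using psi_near_1(2)[OF pN sN bN R BR[OF that]] .
  qed
  have rep: "cauchy_H M w - cauchy_H N w = w * D (1 / w)" if "w \<noteq> 0" for w
    unfolding H_psi[OF that] D_def by (simp add: divide_inverse algebra_simps)
  show ?thesis
  proof (cases "\<forall>u\<in>B. D u = 0")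
    case True
    have eqG: "cauchy_G M z = cauchy_G N z" if z: "Im z > 4 * R" for z
    proof -
      have z0: "z \<noteq> 0" using z R by auto
      have "cmod z \<ge> Im z" using abs_Im_le_cmod[of z] by simp
      then have "cmod z > 4 * R" using z by simp
      moreover have "cmod z > 0" using z0 by simp
      ultimately have "1 / cmod z < 1 / (4 * R)" using R
        by (metis divide_strict_left_mono mult_pos_pos zero_less_numeral zero_less_one)
      then have "1 / z \<in> B" by (simp add: B_def norm_divide)
      then have "cauchy_H M z = cauchy_H N z" using rep[OF z0] True by simp
      then show ?thesis unfolding cauchy_H_def by (metis divide_divide_eq_right divide_self_if mult_1 nonzero_mult_div_cancel_left one_divide_eq_0_iff eq_divide_eq)
    qed
    have eqall: "cauchy_G M z = cauchy_G N z" if "Im z > 0" for z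
    proof (rule analytic_continuation_open[where s="{z. Im z > 4 * R}" and s'="{z. Im z > 0}"
          and f="cauchy_G M" and g="cauchy_G N"])
      show "open {z::complex. 4 * R < Im z}" by (simp add: open_halfspace_Im_gt)
      show "{z::complex. 4 * R < Im z} \<noteq> {}" by (auto intro: exI[of _ "\<i> * complex_of_real (4 * R + 1)"])
      show "{z::complex. 4 * R < Im z} \<subseteq> {z. 0 < Im z}" using R by auto
      show "cauchy_G M holomorphic_on {z. 0 < Im z}" by (rule G_holo[OF fM sM])
      show "cauchy_G N holomorphic_on {z. 0 < Im z}" by (rule G_holo[OF fN sN])
    qed (use eqG that upper_half_open upper_half_connected in auto)
    have "M = N" by (rule cauchy_unique[OF fM sM fN sN eqall])
    then show ?thesis using symmetric_iff_refl[OF sM] by (simp add: N_def M_def)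
  next
    case False
    then have ne: "\<exists>w\<in>B. D w \<noteq> 0" by blast
    have "0 \<in> B" using R by (simp add: B_def)
    from zorder_exist_zero[OF Dh _ _ this ne]
    obtain r where r: "r > 0" "cball 0 r \<subseteq> B" "zor_poly D 0 holomorphic_on cball 0 r"
      "\<forall>w\<in>cball 0 r. D w = zor_poly D 0 w * (w - 0) ^ nat (zorder D 0) \<and> zor_poly D 0 w \<noteq> 0"
      by (auto simp: B_def)
    define E where "E = zor_poly D 0"
    define n where "n = nat (zorder D 0)"
    show ?thesis
    proof (rule FalseE, rule halving_core[OF pM sM bM pN sN bN R ff r(1), where E=E and n=n])
      show "isCont E 0"
      proof -
        have "continuous_on (cball 0 r) E"
          using r(3) unfolding E_def by (rule holomorphic_on_imp_continuous_on)
        moreover have "0 \<in> interior (cball (0::complex) r)" using r(1) by simp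
        ultimately show ?thesis by (rule continuous_on_interior)
      qed
      show "E w \<noteq> 0" if "cmod w \<le> r" for w using r(4) that unfolding E_def by auto
      show "cauchy_H M w - cauchy_H N w = w * E (1 / w) * (1 / w) ^ n" if w: "Im w > 0" "cmod w \<ge> 1 / r" for w
      proof -
        have w0: "w \<noteq> 0" using w by auto
        have "cmod (1 / w) \<le> r"
        proof -
          have "1 / cmod w \<le> 1 / (1 / r)" using w r w0 by (intro divide_left_mono) auto
          then show ?thesis using r by (simp add: norm_divide)
        qed
        then have "1 / w \<in> cball 0 r" by simp
        then have "D (1 / w) = E (1 / w) * (1 / w) ^ n" using r(4) by (simp add: E_def n_def)
        then show ?thesis using rep[OF w0] by (simp add: mult.assoc)
      qed
    qed (auto simp: pM)
  qed
qed


theorem theorem6p6: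
  fixes \<mu> :: "real \<Rightarrow> real measure" and \<gamma> :: real and \<tau> :: "real measure"
  assumes "monotone_conv_semigroup \<mu>"
    and "\<mu> 0 = return borel 0"
    and "associated_pair \<mu> \<gamma> \<tau>"
    and "\<forall>t\<ge>0. compact (measure_support (\<mu> t))"
  shows "((\<exists>t0>0. symmetric_measure (\<mu> t0)) \<longleftrightarrow> (\<forall>t>0. symmetric_measure (\<mu> t)))
       \<and> ((\<forall>t>0. symmetric_measure (\<mu> t)) \<longleftrightarrow> (\<gamma> = 0 \<and> symmetric_measure \<tau>))"
proof -
  note sg = assms(1) and ap = assms(3) and cs = assms(4)
  have fin: "finite_measure \<tau>" and s\<tau>: "sets \<tau> = sets borel" using ap_basic[OF ap] by auto
  have Asym_all: "\<forall>t>0. symmetric_measure (\<mu> t)"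
    if As: "\<And>z. Im z > 0 \<Longrightarrow> gen_A \<gamma> \<tau> (- cnj z) = - cnj (gen_A \<gamma> \<tau> z)"
    using sym_from_A_sym[OF sg ap As] by auto
  have seq_Asym: "gen_A \<gamma> \<tau> (- cnj z) = - cnj (gen_A \<gamma> \<tau> z)"
    if "t \<longlonglongrightarrow> 0" "\<And>n. t n > 0" "\<And>n. symmetric_measure (\<mu> (t n))" "Im z > 0" for t z
    by (rule A_sym_from_seq[OF sg ap that])
  have one_two: "\<forall>t>0. symmetric_measure (\<mu> t)" if "t0 > 0" "symmetric_measure (\<mu> t0)" for t0
  proof -
    define t where "t n = t0 / 2 ^ n" for n :: nat
    have tp: "t n > 0" for n using that(1) by (simp add: t_def)
    have tl: "t \<longlonglongrightarrow> 0" unfolding t_def by (rule LIMSEQ_divide_realpow_zero) simp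
    have ts: "symmetric_measure (\<mu> (t n))" for n
    proof (induction n)
      case 0
      then show ?case using that(2) by (simp add: t_def)
    next
      case (Suc n)
      have e: "t (Suc n) + t (Suc n) = t n" by (simp add: t_def)
      show ?case
        by (rule halving[OF sg less_imp_le[OF tp]]) (use cs tp Suc.IH e in \<open>auto intro: less_imp_le\<close>)
    qed
    show ?thesis by (rule Asym_all) (rule seq_Asym[OF tl tp ts])
  qed
  have two_three: "\<gamma> = 0 \<and> symmetric_measure \<tau>" if "\<forall>t>0. symmetric_measure (\<mu> t)"
  proof (rule A_sym_imp[OF fin s\<tau>])
    fix z :: complex assume z: "Im z > 0"
    show "gen_A \<gamma> \<tau> (- cnj z) = - cnj (gen_A \<gamma> \<tau> z)"
    proof (rule seq_Asym[OF LIMSEQ_inverse_real_of_nat _ _ z])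
      show "inverse (real (Suc n)) > 0" for n by simp
      show "symmetric_measure (\<mu> (inverse (real (Suc n))))" for n using that by simp
    qed
  qed
  have three_two: "\<forall>t>0. symmetric_measure (\<mu> t)" if "\<gamma> = 0" "symmetric_measure \<tau>"
    by (rule Asym_all) (rule sym_imp_A_sym[OF fin s\<tau> that])
  have c1: "(\<exists>t0>0. symmetric_measure (\<mu> t0)) \<longleftrightarrow> (\<forall>t>0. symmetric_measure (\<mu> t))"
  proof
    assume "\<exists>t0>0. symmetric_measure (\<mu> t0)"
    then show "\<forall>t>0. symmetric_measure (\<mu> t)" using one_two by blast
  next
    assume "\<forall>t>0. symmetric_measure (\<mu> t)"
    then show "\<exists>t0>0. symmetric_measure (\<mu> t0)" by (intro exI[of _ 1]) simp
  qed
  have c2: "(\<forall>t>0. symmetric_measure (\<mu> t)) \<longleftrightarrow> (\<gamma> = 0 \<and> symmetric_measure \<tau>)"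
    using two_three three_two by blast
  show ?thesis using c1 c2 by blast
qed


end
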